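(* Let $u$ be a minimizer of the problem $\min f(x)$ s.t. $G(x)\succeq 0$, and suppose the nondegeneracy condition, the strict complementarity condition and the second order sufficient condition hold at $u$. Then there exists $\Theta \in \mathcal{S}^{m-r}$ such that \[ \nabla L^{re}(u) = 0, \qquad \Theta \succeq 0,\quad T(u)\succeq 0, \qquad \langle \Theta, T(u)\rangle = 0, \] where $L^{re}(x) := f(x) - \langle \Theta, T(x)\rangle$. Furthermore: (i) the linear mapping $\nabla T(u)$ is regular, i.e. $\ker \nabla T(u)^* = \{0\}\subset \mathcal{S}^{m-r}$; (ii) $\Theta \succ 0$; (iii) for all $0 \neq h \in \ker \nabla T(u)$, $h^T \nabla^2 L^{re}(u)\, h > 0$.
   Context: Let $f\in\mathbb{R}[x]$, $x=(x_1,\dots,x_n)$, and let $G(x)$ be an $m\times m$ symmetric polynomial matrix; consider $\min f(x)$ s.t. $G(x)\succeq 0$. $\mathcal{S}^k$ denotes the $k\times k$ real symmetric matrices. For a matrix polynomial $F$, $\nabla F(x)[d]=\sum_i d_i \nabla_{x_i}F(x)$ and its adjoint is $\nabla F(x)^*[X]=(\langle \nabla_{x_1}F(x),X\rangle,\dots,\langle \nabla_{x_n}F(x),X\rangle)^T$. Nondegeneracy condition at feasible $u$: $\operatorname{Im}\nabla G(u) + \{N\in\mathcal{S}^m : E^TNE=0\} = \mathcal{S}^m$, where the columns of $E$ form a basis of $\ker G(u)$. Under it there is a unique $\Lambda\in\mathcal{S}^m$ with $\nabla f(u)-\nabla G(u)^*[\Lambda]=0$, $\Lambda\succeq 0$,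 $G(u)\succeq0$, $\langle\Lambda,G(u)\rangle=0$. Strict complementarity condition: $\operatorname{rank}G(u)+\operatorname{rank}\Lambda=m$. Second order sufficient condition: $h^T(\nabla^2 L(u,\Lambda)+H(u,\Lambda))h>0$ for all nonzero $h\in\{h\in\mathbb{R}^n:\sum_i h_i E^T\nabla_{x_i}G(u)E=0\}$, where $L(x,\Lambda)=f(x)-\langle\Lambda,G(x)\rangle$ and $H(x,Q)_{ij}=2\langle Q,\nabla_{x_i}G(x)\,G(x)^{\dagger}\,\nabla_{x_j}G(x)\rangle$ ($\dagger$ = Moore–Penrose inverse). Let $r=\operatorname{rank}G(u)$. Up to a permutation of rows and columns write $G=\begin{bmatrix}A & B\\ B^T & C\end{bmatrix}$ with $A\in\mathcal{S}^r\mathbb{R}[x]$ and $\operatorname{rank}A(u)=r$. Set $p(x)=\det A(x)$, $S(x)=C(x)-B(x)^TA(x)^{-1}B(x)$ (Schur complement, defined near $u$), and $T(x)=p(x)^2S(x)$, which is an $(m-r)\times(m-r)$ symmetric polynomial matrix (since $pA^{-1}$ is the adjugate of $A$), with $T(u)=0$; near $u$, $G(x)\succeq0$ iff $T(x)\succeq0$. *)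

theory Defs
  imports "HOL-Analysis.Analysis"
begin

inductive_set poly_fun :: "(real^'n \<Rightarrow> real) set" where
  pf_const: "(\<lambda>x. c) \<in> poly_fun"
| pf_var: "(\<lambda>x. x $ i) \<in> poly_fun"
| pf_add: "p \<in> poly_fun \<Longrightarrow> q \<in> poly_fun \<Longrightarrow> (\<lambda>x. p x + q x) \<in> poly_fun"
| pf_mult: "p \<in> poly_fun \<Longrightarrow> q \<in> poly_fun \<Longrightarrow> (\<lambda>x. p x * q x) \<in> poly_fun"

definition sym_poly_matrix :: "(real^'n \<Rightarrow> real^'m^'m) \<Rightarrow> bool" where
  "sym_poly_matrix G \<longleftrightarrow> (\<forall>i j. (\<lambda>x. G x $ i $ j) \<in> poly_fun) \<and> (\<forall>x. transpose (G x) = G x)"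

definition psd :: "real^'m^'m \<Rightarrow> bool" where
  "psd X \<longleftrightarrow> transpose X = X \<and> (\<forall>v. 0 \<le> v \<bullet> (X *v v))"

definition frob :: "real^'m^'k \<Rightarrow> real^'m^'k \<Rightarrow> real" where
  "frob X Y = (\<Sum>i\<in>UNIV. \<Sum>j\<in>UNIV. X $ i $ j * Y $ i $ j)"

definition mp_inverse :: "real^'m^'m \<Rightarrow> real^'m^'m" where
  "mp_inverse A = (THE X. A ** X ** A = A \<and> X ** A ** X = X \<and>
      transpose (A ** X) = A ** X \<and> transpose (X ** A) = X ** A)"

definition partial :: "(real^'n \<Rightarrow> 'b::real_normed_vector) \<Rightarrow> 'n \<Rightarrow> real^'n \<Rightarrow> 'b" where
  "partial F i x = frechet_derivative F (at x) (axis i 1)"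

definition grad :: "(real^'n \<Rightarrow> real) \<Rightarrow> real^'n \<Rightarrow> real^'n" where
  "grad F x = (\<chi> i. partial F i x)"

definition hess :: "(real^'n \<Rightarrow> real) \<Rightarrow> real^'n \<Rightarrow> real^'n^'n" where
  "hess F x = (\<chi> i j. partial (\<lambda>y. partial F i y) j x)"

definition dirder :: "(real^'n \<Rightarrow> real^'m^'k) \<Rightarrow> real^'n \<Rightarrow> real^'n \<Rightarrow> real^'m^'k" where
  "dirder F x d = (\<Sum>i\<in>UNIV. d $ i *\<^sub>R partial F i x)"

definition dirder_adj :: "(real^'n \<Rightarrow> real^'m^'k) \<Rightarrow> real^'n \<Rightarrow> real^'m^'k \<Rightarrow> real^'n" where
  "dirder_adj F x X = (\<chi> i. frob (partial F i x) X)"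

definition minimizer :: "(real^'n \<Rightarrow> real) \<Rightarrow> (real^'n \<Rightarrow> real^'m^'m) \<Rightarrow> real^'n \<Rightarrow> bool" where
  "minimizer f G u \<longleftrightarrow> psd (G u) \<and> (\<forall>x. psd (G x) \<longrightarrow> f u \<le> f x)"

text \<open>{N in S^m : E^T N E = 0}, where the columns of E form a basis of ker G(u);
  E^T N E = 0 iff v^T N w = 0 for all v, w in ker G(u).\<close>
definition kerzero_set :: "real^'m^'m \<Rightarrow> (real^'m^'m) set" where
  "kerzero_set Gu = {N. transpose N = N \<and>
      (\<forall>v w. Gu *v v = 0 \<longrightarrow> Gu *v w = 0 \<longrightarrow> v \<bullet> (N *v w) = 0)}"

definition nondegenerate :: "(real^'n \<Rightarrow> real^'m^'m) \<Rightarrow> real^'n \<Rightarrow> bool" where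
  "nondegenerate G u \<longleftrightarrow>
     (\<forall>N. transpose N = N \<longrightarrow>
        (\<exists>d M. M \<in> kerzero_set (G u) \<and> N = dirder G u d + M))"

definition KKT_multiplier :: "(real^'n \<Rightarrow> real) \<Rightarrow> (real^'n \<Rightarrow> real^'m^'m) \<Rightarrow> real^'n \<Rightarrow> real^'m^'m \<Rightarrow> bool" where
  "KKT_multiplier f G u \<Lambda> \<longleftrightarrow> transpose \<Lambda> = \<Lambda> \<and>
     grad f u - dirder_adj G u \<Lambda> = 0 \<and> psd \<Lambda> \<and> psd (G u) \<and> frob \<Lambda> (G u) = 0"

definition strict_compl :: "(real^'n \<Rightarrow> real^'m^'m) \<Rightarrow> real^'n \<Rightarrow> real^'m^'m \<Rightarrow> bool" where
  "strict_compl G u \<Lambda> \<longleftrightarrow> rank (G u) + rank \<Lambda> = CARD('m)"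

definition Lagr :: "(real^'n \<Rightarrow> real) \<Rightarrow> (real^'n \<Rightarrow> real^'m^'m) \<Rightarrow> real^'m^'m \<Rightarrow> real^'n \<Rightarrow> real" where
  "Lagr f G \<Lambda> x = f x - frob \<Lambda> (G x)"

definition Hterm :: "(real^'n \<Rightarrow> real^'m^'m) \<Rightarrow> real^'n \<Rightarrow> real^'m^'m \<Rightarrow> real^'n^'n" where
  "Hterm G x Q = (\<chi> i j. 2 * frob Q (partial G i x ** mp_inverse (G x) ** partial G j x))"

text \<open>Critical cone {h : sum_i h_i E^T nabla_{x_i}G(u) E = 0}, E a basis of ker G(u).\<close>
definition crit_cone :: "(real^'n \<Rightarrow> real^'m^'m) \<Rightarrow> real^'n \<Rightarrow> (real^'n) set" where
  "crit_cone G u = {h. \<forall>v w. G u *v v = 0 \<longrightarrow> G u *v w = 0 \<longrightarrow>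
                          v \<bullet> (dirder G u h *v w) = 0}"

definition SOSC :: "(real^'n \<Rightarrow> real) \<Rightarrow> (real^'n \<Rightarrow> real^'m^'m) \<Rightarrow> real^'n \<Rightarrow> real^'m^'m \<Rightarrow> bool" where
  "SOSC f G u \<Lambda> \<longleftrightarrow> (\<forall>h \<in> crit_cone G u. h \<noteq> 0 \<longrightarrow>
      0 < h \<bullet> ((hess (Lagr f G \<Lambda>) u + Hterm G u \<Lambda>) *v h))"

text \<open>The partition G = [A B; B^T C] after a simultaneous permutation of rows and columns
  is encoded by an index set I (the rows/columns of A); the rows/columns of C are -I.
  Matrices of size |I| x |I| and |-I| x |-I| are encoded as m x m matrices vanishing outside
  the corresponding block.  A is padded with the identity outside I x I, so that
  det (padA) = det A and the I-block of the inverse of padA is A^{-1}.\<close>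

definition padA :: "'m set \<Rightarrow> real^'m^'m \<Rightarrow> real^'m^'m" where
  "padA I X = (\<chi> a b. if a \<in> I \<and> b \<in> I then X $ a $ b else if a = b then 1 else 0)"

definition pdet :: "(real^'n \<Rightarrow> real^'m^'m) \<Rightarrow> 'm set \<Rightarrow> real^'n \<Rightarrow> real" where
  "pdet G I x = det (padA I (G x))"

text \<open>Schur complement S = C - B^T A^{-1} B (block -I x -I).\<close>
definition schur :: "(real^'n \<Rightarrow> real^'m^'m) \<Rightarrow> 'm set \<Rightarrow> real^'n \<Rightarrow> real^'m^'m" where
  "schur G I x = (\<chi> j k. if j \<notin> I \<and> k \<notin> I then
       G x $ j $ k - (\<Sum>a\<in>I. \<Sum>b\<in>I. G x $ a $ j * matrix_inv (padA I (G x)) $ a $ b * G x $ b $ k)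
     else 0)"

definition Tmat :: "(real^'n \<Rightarrow> real^'m^'m) \<Rightarrow> 'm set \<Rightarrow> real^'n \<Rightarrow> real^'m^'m" where
  "Tmat G I x = (pdet G I x)\<^sup>2 *\<^sub>R schur G I x"

definition sym_on :: "'m set \<Rightarrow> (real^'m^'m) set" where
  "sym_on J = {X. transpose X = X \<and> (\<forall>i j. (i \<notin> J \<or> j \<notin> J) \<longrightarrow> X $ i $ j = 0)}"

definition psd_on :: "'m set \<Rightarrow> real^'m^'m \<Rightarrow> bool" where
  "psd_on J X \<longleftrightarrow> (\<forall>v. (\<forall>i. i \<notin> J \<longrightarrow> v $ i = 0) \<longrightarrow> 0 \<le> v \<bullet> (X *v v))"

definition pd_on :: "'m set \<Rightarrow> real^'m^'m \<Rightarrow> bool" where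
  "pd_on J X \<longleftrightarrow> (\<forall>v. (\<forall>i. i \<notin> J \<longrightarrow> v $ i = 0) \<longrightarrow> v \<noteq> 0 \<longrightarrow> 0 < v \<bullet> (X *v v))"

end

theory Submission
  imports Defs
begin

lemma has_derivative_vec_lambdaI:
  fixes f :: "'a::real_normed_vector \<Rightarrow> 'b::euclidean_space^'i"
  assumes "\<And>i. ((\<lambda>x. f x $ i) has_derivative (\<lambda>h. f' h $ i)) (at x within S)"
  shows "(f has_derivative f') (at x within S)"
proof -
  have "\<forall>j\<in>Basis. ((\<lambda>x. f x \<bullet> j) has_derivative (\<lambda>x. f' x \<bullet> j)) (at x within S)"
  proof
    fix j :: "'b^'i" assume "j \<in> Basis"
    then obtain i u where j: "j = axis i u" and u: "u \<in> Basis"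
      unfolding Basis_vec_def by auto
    have "\<forall>u\<in>Basis. ((\<lambda>x. f x $ i \<bullet> u) has_derivative (\<lambda>h. f' h $ i \<bullet> u)) (at x within S)"
      using assms[of i] has_derivative_componentwise_within[of "\<lambda>x. f x $ i" "\<lambda>h. f' h $ i"] 
      by blast
    then show "((\<lambda>x. f x \<bullet> j) has_derivative (\<lambda>x. f' x \<bullet> j)) (at x within S)"
      using u by (simp add: j inner_axis)
  qed
  then show ?thesis using has_derivative_componentwise_within by blast
qed

lemma poly_fun_deriv:
  assumes "p \<in> poly_fun"
  shows "\<exists>D. (\<forall>i. D i \<in> poly_fun) \<and> (\<forall>x. (p has_derivative (\<lambda>h. \<Sum>i\<in>UNIV. h$i * D i x)) (at x))"
  using assms
proof induction
  case (pf_const c)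
  show ?case
    by (rule exI[of _ "\<lambda>i x. 0"]) (auto intro: poly_fun.pf_const)
next
  case (pf_var k)
  have "((\<lambda>x::real^'a. x $ k) has_derivative (\<lambda>h. \<Sum>i\<in>UNIV. h$i * (if i = k then 1 else 0))) (at x)" for x
  proof -
    have "(\<lambda>h::real^'a. \<Sum>i\<in>UNIV. h$i * (if i = k then 1 else 0)) = (\<lambda>h. h $ k)"
      by (simp add: if_distrib cong: if_cong)
    moreover have "bounded_linear (\<lambda>h::real^'a. h $ k)"
      by (rule bounded_linear_vec_nth)
    ultimately show ?thesis by (simp add: bounded_linear_imp_has_derivative)
  qed
  then show ?case
    by (intro exI[of _ "\<lambda>i x. if i = k then 1 else 0"]) (auto intro: poly_fun.pf_const)
next
  case (pf_add p q)
  then obtain D1 D2 where D1: "\<forall>i. D1 i \<in> poly_fun" "\<forall>x. (p has_derivative (\<lambda>h. \<Sum>i\<in>UNIV. h$i * D1 i x)) (at x)"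
    and D2: "\<forall>i. D2 i \<in> poly_fun" "\<forall>x. (q has_derivative (\<lambda>h. \<Sum>i\<in>UNIV. h$i * D2 i x)) (at x)"
    by blast
  show ?case
  proof (intro exI[of _ "\<lambda>i x. D1 i x + D2 i x"] conjI allI)
    fix i show "(\<lambda>x. D1 i x + D2 i x) \<in> poly_fun"
      using D1 D2 by (auto intro: poly_fun.pf_add)
  next
    fix x
    have "((\<lambda>x. p x + q x) has_derivative (\<lambda>h. (\<Sum>i\<in>UNIV. h$i * D1 i x) + (\<Sum>i\<in>UNIV. h$i * D2 i x))) (at x)"
      using D1 D2 by (intro has_derivative_add) auto
    then show "((\<lambda>x. p x + q x) has_derivative (\<lambda>h. \<Sum>i\<in>UNIV. h$i * (D1 i x + D2 i x))) (at x)"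
      by (simp add: distrib_left sum.distrib)
  qed
next
  case (pf_mult p q)
  then obtain D1 D2 where D1: "\<forall>i. D1 i \<in> poly_fun" "\<forall>x. (p has_derivative (\<lambda>h. \<Sum>i\<in>UNIV. h$i * D1 i x)) (at x)"
    and D2: "\<forall>i. D2 i \<in> poly_fun" "\<forall>x. (q has_derivative (\<lambda>h. \<Sum>i\<in>UNIV. h$i * D2 i x)) (at x)"
    by blast
  show ?case
  proof (intro exI[of _ "\<lambda>i x. p x * D2 i x + D1 i x * q x"] conjI allI)
    fix i show "(\<lambda>x. p x * D2 i x + D1 i x * q x) \<in> poly_fun"
      using D1 D2 pf_mult by (auto intro!: poly_fun.pf_add poly_fun.pf_mult)
  next
    fix x
    have "((\<lambda>x. p x * q x) has_derivative (\<lambda>h. p x * (\<Sum>i\<in>UNIV. h$i * D2 i x) + (\<Sum>i\<in>UNIV. h$i * D1 i x) * q x)) (at x)"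
      using D1 D2 by (intro has_derivative_mult) auto
    then show "((\<lambda>x. p x * q x) has_derivative (\<lambda>h. \<Sum>i\<in>UNIV. h$i * (p x * D2 i x + D1 i x * q x))) (at x)"
      by (simp add: distrib_left sum.distrib sum_distrib_left sum_distrib_right mult_ac)
  qed
qed

lemma partial_eq:
  assumes "(F has_derivative F') (at x)"
  shows "partial F i x = F' (axis i 1)"
  unfolding partial_def using frechet_derivative_at[OF assms] by simp

lemma sum_axis_mult: "(\<Sum>k\<in>UNIV. (axis i (1::real))$k * c k) = c i"
proof -
  have "\<And>k. (axis i (1::real))$k * c k = (if k = i then c k else 0)" by (simp add: axis_def)
  then show ?thesis by simp
qed

lemma poly_fun_has_derivative:
  assumes "p \<in> poly_fun"
  shows "(p has_derivative (\<lambda>h. \<Sum>i\<in>UNIV. h$i * partial p i x)) (at x)"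
proof -
  obtain D where D: "\<forall>i. D i \<in> poly_fun" "\<forall>x. (p has_derivative (\<lambda>h. \<Sum>i\<in>UNIV. h$i * D i x)) (at x)"
    using poly_fun_deriv[OF assms] by blast
  have "partial p i x = D i x" for i x
    using partial_eq[OF D(2)[rule_format, of x], of i] by (simp add: sum_axis_mult)
  then show ?thesis using D by simp
qed

lemma poly_fun_partial:
  assumes "p \<in> poly_fun"
  shows "(\<lambda>x. partial p i x) \<in> poly_fun"
proof -
  obtain D where D: "\<forall>i. D i \<in> poly_fun" "\<forall>x. (p has_derivative (\<lambda>h. \<Sum>i\<in>UNIV. h$i * D i x)) (at x)"
    using poly_fun_deriv[OF assms] by blast
  have "partial p i x = D i x" for i x
    using partial_eq[OF D(2)[rule_format, of x], of i] by (simp add: sum_axis_mult)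
  then have "(\<lambda>x. partial p i x) = D i" by auto
  then show ?thesis using D by simp
qed

lemma poly_fun_differentiable: "p \<in> poly_fun \<Longrightarrow> p differentiable (at x)"
  using poly_fun_has_derivative differentiable_def by blast

lemma poly_fun_continuous: "p \<in> poly_fun \<Longrightarrow> continuous_on UNIV p"
  by (meson differentiable_imp_continuous_on differentiable_on_def poly_fun_differentiable
      differentiable_at_withinI)

lemma poly_fun_sum:
  assumes "finite A" "\<And>a. a \<in> A \<Longrightarrow> (\<lambda>x. f a x) \<in> poly_fun"
  shows "(\<lambda>x. \<Sum>a\<in>A. f a x) \<in> poly_fun"
  using assms
proof (induction A rule: finite_induct)
  case empty
  then show ?case using poly_fun.pf_const[of 0] by simp
next
  case (insert a A)
  then show ?case by (simp add: poly_fun.pf_add)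
qed

lemma poly_fun_prod:
  assumes "finite A" "\<And>a. a \<in> A \<Longrightarrow> (\<lambda>x. f a x) \<in> poly_fun"
  shows "(\<lambda>x. \<Prod>a\<in>A. f a x) \<in> poly_fun"
  using assms
proof (induction A rule: finite_induct)
  case empty
  then show ?case using poly_fun.pf_const[of 1] by simp
next
  case (insert a A)
  then show ?case by (simp add: poly_fun.pf_mult)
qed

lemma poly_fun_cmult: "p \<in> poly_fun \<Longrightarrow> (\<lambda>x. c * p x) \<in> poly_fun"
  using poly_fun.pf_mult[OF poly_fun.pf_const] by blast

lemma poly_fun_diff: "p \<in> poly_fun \<Longrightarrow> q \<in> poly_fun \<Longrightarrow> (\<lambda>x. p x - q x) \<in> poly_fun"
  using poly_fun.pf_add[of p "\<lambda>x. (-1) * q x"] poly_fun_cmult[of q "-1"] by simp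

lemma poly_fun_det:
  fixes M :: "real^'n \<Rightarrow> real^'m^'m"
  assumes "\<And>a b. (\<lambda>x. M x $ a $ b) \<in> poly_fun"
  shows "(\<lambda>x. det (M x)) \<in> poly_fun"
  unfolding det_def
  by (intro poly_fun_sum poly_fun_cmult poly_fun_prod assms) auto

lemma linear_axis_expand:
  fixes L :: "real^'n \<Rightarrow> 'b::real_vector"
  assumes "linear L"
  shows "L h = (\<Sum>i\<in>UNIV. h$i *\<^sub>R L (axis i 1))"
proof -
  have "h = (\<Sum>i\<in>UNIV. h$i *\<^sub>R axis i 1)"
    using basis_expansion[of h] by (simp add: scalar_mult_eq_scaleR)
  then have "L h = L (\<Sum>i\<in>UNIV. h$i *\<^sub>R axis i 1)" by simp
  also have "\<dots> = (\<Sum>i\<in>UNIV. h$i *\<^sub>R L (axis i 1))"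
    using assms by (simp add: linear_sum linear_scale)
  finally show ?thesis .
qed

lemma has_derivative_dirder:
  assumes "(F has_derivative F') (at x)"
  shows "dirder F x h = F' h"
  using linear_axis_expand[of F' h] assms partial_eq[OF assms]
  by (simp add: dirder_def has_derivative_linear)

lemma has_derivative_matrixI:
  fixes M :: "'a::real_normed_vector \<Rightarrow> real^'m^'k"
  assumes "\<And>a b. ((\<lambda>y. M y $ a $ b) has_derivative D a b) (at x)"
  shows "(M has_derivative (\<lambda>h. \<chi> a b. D a b h)) (at x)"
  by (intro has_derivative_vec_lambdaI) (simp add: assms)

lemma has_derivative_entry:
  fixes M :: "'a::real_normed_vector \<Rightarrow> real^'m^'k"
  assumes "(M has_derivative M') F"
  shows "((\<lambda>y. M y $ a $ b) has_derivative (\<lambda>h. M' h $ a $ b)) F"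
proof -
  have "linear (\<lambda>A::real^'m^'k. A $ a $ b)"
    by (auto intro!: linearI)
  then have "bounded_linear (\<lambda>A::real^'m^'k. A $ a $ b)"
    by (simp add: linear_conv_bounded_linear)
  from bounded_linear.has_derivative[OF this assms] show ?thesis .
qed

lemma partial_entry:
  fixes M :: "real^'n \<Rightarrow> real^'m^'k"
  assumes "M differentiable (at x)"
  shows "partial M i x $ a $ b = partial (\<lambda>y. M y $ a $ b) i x"
proof -
  obtain M' where M': "(M has_derivative M') (at x)" using assms differentiable_def by blast
  show ?thesis using partial_eq[OF M'] partial_eq[OF has_derivative_entry[OF M']] by simp
qed

lemma bounded_bilinear_matrix_mult:
  "bounded_bilinear (\<lambda>(A::real^'n^'m) (B::real^'p^'n). A ** B)"
proof -
  have "bilinear (\<lambda>(A::real^'n^'m) (B::real^'p^'n). A ** B)"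
    unfolding bilinear_def
    by (auto intro!: linearI simp: matrix_add_ldistrib matrix_scalar_ac scalar_matrix_assoc
        matrix_matrix_mult_def vec_eq_iff sum.distrib distrib_right distrib_left sum_distrib_left mult_ac)
  then show ?thesis by (simp add: bilinear_conv_bounded_bilinear)
qed

lemma has_derivative_matrix_mult:
  fixes A :: "'a::real_normed_vector \<Rightarrow> real^'n^'m" and B :: "'a \<Rightarrow> real^'p^'n"
  assumes "(A has_derivative A') (at x)" "(B has_derivative B') (at x)"
  shows "((\<lambda>y. A y ** B y) has_derivative (\<lambda>h. A x ** B' h + A' h ** B x)) (at x)"
  using bounded_bilinear.FDERIV[OF bounded_bilinear_matrix_mult assms] by simp

lemma bounded_linear_transpose: "bounded_linear (transpose :: real^'n^'m \<Rightarrow> real^'m^'n)"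
proof -
  have "linear (transpose :: real^'n^'m \<Rightarrow> real^'m^'n)"
    by (auto intro!: linearI simp: transpose_def vec_eq_iff)
  then show ?thesis by (simp add: linear_conv_bounded_linear)
qed

lemma has_derivative_transpose:
  fixes A :: "'a::real_normed_vector \<Rightarrow> real^'n^'m"
  assumes "(A has_derivative A') F"
  shows "((\<lambda>y. transpose (A y)) has_derivative (\<lambda>h. transpose (A' h))) F"
  using bounded_linear.has_derivative[OF bounded_linear_transpose assms] .

lemma frob_inner: "frob X Y = X \<bullet> Y"
  by (simp add: frob_def inner_vec_def)

definition outer :: "real^'m \<Rightarrow> real^'m \<Rightarrow> real^'m^'m" where
  "outer v w = (\<chi> i j. v$i * w$j)"

lemma inner_mat_sum: "(X::real^'m^'k) \<bullet> Y = (\<Sum>i\<in>UNIV. \<Sum>j\<in>UNIV. X$i$j * Y$i$j)"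
  by (simp add: inner_vec_def)

lemma sym_quad: "transpose M = M \<Longrightarrow> v \<bullet> (M *v w) = w \<bullet> ((M::real^'m^'m) *v v)"
proof -
  assume "transpose M = M"
  have "v \<bullet> (M *v w) = (v v* M) \<bullet> w" by (rule dot_lmul_matrix[symmetric])
  also have "v v* M = transpose M *v v" by (rule transpose_matrix_vector[symmetric])
  also have "transpose M *v v = M *v v" using \<open>transpose M = M\<close> by simp
  finally show ?thesis by (simp add: inner_commute)
qed

lemma inner_outer: "(M::real^'m^'m) \<bullet> outer v v = v \<bullet> (M *v v)"
  by (simp add: inner_mat_sum outer_def inner_vec_def matrix_vector_mult_def
      sum_distrib_left mult_ac)

lemma mat_mul_outer: "(M::real^'m^'m) ** outer v w = outer (M *v v) w"
  by (simp add: outer_def matrix_matrix_mult_def matrix_vector_mult_def vec_eq_iff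
      sum_distrib_right sum_distrib_left mult_ac)

lemma col_entry: "((M::real^'m^'k) *v axis k 1) $ a = M $ a $ k"
  by (simp add: matrix_vector_mult_def axis_def if_distrib cong: if_cong)

lemma quad_aux: "(b::real) \<ge> 0 \<Longrightarrow> 2 * (- a / (b + 1)) * a + (- a / (b + 1))^2 * b = a^2 * (- b - 2) / (b + 1)^2"
proof -
  assume b: "b \<ge> 0"
  then have c: "b + 1 \<noteq> 0" by simp
  show ?thesis using c by (simp add: divide_simps power2_eq_square) (simp add: algebra_simps)
qed

lemma psd_zero:
  fixes M :: "real^'m^'m"
  assumes "psd M" "v \<bullet> (M *v v) = 0"
  shows "M *v v = 0"
proof -
  have sym: "transpose M = M" and pos: "\<And>x. 0 \<le> x \<bullet> (M *v x)" using assms(1) psd_def by auto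
  let ?w = "M *v v"
  let ?a = "?w \<bullet> (M *v v)" and ?b = "?w \<bullet> (M *v ?w)"
  have b: "0 \<le> ?b" using pos by blast
  have key: "(v + t *\<^sub>R ?w) \<bullet> (M *v (v + t *\<^sub>R ?w)) = 2 * t * ?a + t^2 * ?b" for t
  proof -
    have "(v + t *\<^sub>R ?w) \<bullet> (M *v (v + t *\<^sub>R ?w))
        = v \<bullet> (M *v v) + t * (v \<bullet> (M *v ?w)) + t * (?w \<bullet> (M *v v)) + t^2 * ?b"
      by (simp add: matrix_vector_right_distrib matrix_vector_mult_scaleR inner_add_left
          inner_add_right power2_eq_square algebra_simps)
    also have "v \<bullet> (M *v ?w) = ?a" using sym_quad[OF sym] by blast
    finally show ?thesis using assms(2) by simp
  qed
  have "?a = 0"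
  proof (rule ccontr)
    assume a0: "?a \<noteq> 0"
    let ?t = "- ?a / (?b + 1)"
    have "0 \<le> 2 * ?t * ?a + ?t^2 * ?b" using pos key by metis
    also have "2 * ?t * ?a + ?t^2 * ?b = ?a^2 * (- ?b - 2) / (?b + 1)^2"
      using b by (rule quad_aux)
    also have "\<dots> < 0"
      using a0 b by (intro divide_neg_pos mult_pos_neg) auto
    finally show False by simp
  qed
  then show ?thesis by simp
qed

lemma psd_sym: "psd M \<Longrightarrow> transpose M = M" by (simp add: psd_def)

lemma outer_sym: "transpose (outer v v) = outer v v"
  by (simp add: outer_def transpose_def vec_eq_iff mult.commute)

lemma gram_aux:
  fixes M :: "real^'m^'m"
  shows "card {j. M *v axis j 1 \<noteq> 0} = n \<Longrightarrow> psd M \<Longrightarrow> \<exists>vs. M = sum_list (map (\<lambda>v. outer v v) vs)"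
proof (induction n arbitrary: M rule: less_induct)
  case (less n)
  show ?case
  proof (cases "M = 0")
    case True then show ?thesis by (intro exI[of _ "[]"]) simp
  next
    case False
    have sym: "transpose M = M" using less.prems psd_def by auto
    obtain j where j: "M *v axis j 1 \<noteq> 0"
    proof -
      obtain a b where "M $ a $ b \<noteq> 0" using False by (auto simp: vec_eq_iff)
      moreover have "(M *v axis b 1) $ a = M $ a $ b"
        by (simp add: matrix_vector_mult_def axis_def if_distrib cong: if_cong)
      ultimately show ?thesis using that by (metis zero_index)
    qed
    let ?c = "M *v axis j 1"
    let ?d = "M $ j $ j"
    have cj: "?c $ k = M $ k $ j" for k
      by (simp add: matrix_vector_mult_def axis_def if_distrib cong: if_cong)
    have dq: "axis j 1 \<bullet> (M *v axis j 1) = ?d"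
      by (simp add: inner_axis' cj)
    have "?d \<noteq> 0" using psd_zero[OF less.prems(2)] dq j by auto
    moreover have "?d \<ge> 0" using less.prems(2) dq unfolding psd_def by metis
    ultimately have d: "?d > 0" by simp
    define q where "q = (1 / sqrt ?d) *\<^sub>R ?c"
    define M' where "M' = M - outer q q"
    have qq: "q $ a * q $ b = M $ a $ j * M $ b $ j / ?d" for a b
      using d by (simp add: q_def cj field_simps real_sqrt_mult[symmetric] power2_eq_square[symmetric])
    have symM: "M $ a $ b = M $ b $ a" for a b
    proof -
      have "transpose M $ b $ a = M $ b $ a" using sym by simp
      then show ?thesis by (simp add: transpose_def)
    qed
    have "psd M'"
      unfolding psd_def
    proof
      show "transpose M' = M'" using sym outer_sym[of q]
        by (simp add: M'_def transpose_def vec_eq_iff)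
    next
      show "\<forall>v. 0 \<le> v \<bullet> (M' *v v)"
      proof
        fix v :: "real^'m"
        define t where "t = (?c \<bullet> v) / ?d"
        define w where "w = v - t *\<^sub>R axis j 1"
        have cv: "?c \<bullet> v = axis j 1 \<bullet> (M *v v)" using sym_quad[OF sym] by (metis inner_commute)
        have "0 \<le> w \<bullet> (M *v w)" using less.prems(2) psd_def by blast
        also have "w \<bullet> (M *v w) = v \<bullet> (M *v v) - 2 * t * (?c \<bullet> v) + t^2 * ?d"
          unfolding w_def using dq cv
          by (simp add: matrix_vector_mult_diff_distrib matrix_vector_mult_scaleR inner_diff_left
              inner_diff_right power2_eq_square algebra_simps inner_commute)
        also have "\<dots> = v \<bullet> (M *v v) - (?c \<bullet> v)^2 / ?d"
          using d by (simp add: t_def field_simps power2_eq_square)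
        also have "(?c \<bullet> v)^2 / ?d = v \<bullet> (outer q q *v v)"
        proof -
          have "v \<bullet> (outer q q *v v) = (q \<bullet> v)^2"
            by (simp add: outer_def matrix_vector_mult_def inner_vec_def power2_eq_square
                sum_distrib_left sum_distrib_right mult_ac)
          also have "(q \<bullet> v)^2 = (?c \<bullet> v)^2 / ?d"
            using d by (simp add: q_def power_mult_distrib power_divide)
          finally show ?thesis by simp
        qed
        finally show "0 \<le> v \<bullet> (M' *v v)"
          by (simp add: M'_def matrix_vector_mult_diff_rdistrib inner_diff_right)
      qed
    qed
    have col: "M' *v axis k 1 = M *v axis k 1 - (q $ k) *\<^sub>R q" for k
      by (simp add: M'_def matrix_vector_mult_diff_rdistrib outer_def matrix_vector_mult_def
          axis_def vec_eq_iff if_distrib cong: if_cong)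
    have sub: "{k. M' *v axis k 1 \<noteq> 0} \<subseteq> {k. M *v axis k 1 \<noteq> 0} - {j}"
    proof
      fix k assume k: "k \<in> {k. M' *v axis k 1 \<noteq> 0}"
      have "k \<noteq> j"
      proof
        assume "k = j"
        have "(q $ j) *\<^sub>R q = ?c" using d
          by (simp add: q_def cj vec_eq_iff field_simps)
        then show False using k col \<open>k = j\<close> by simp
      qed
      moreover have "M *v axis k 1 \<noteq> 0"
      proof
        assume "M *v axis k 1 = 0"
        then have "M $ j $ k = 0" using col_entry[of M k j] by simp
        then have "q $ k = 0" by (simp add: q_def cj symM[of k j])
        then show False using k col \<open>M *v axis k 1 = 0\<close> by simp
      qed
      ultimately show "k \<in> {k. M *v axis k 1 \<noteq> 0} - {j}" by simp
    qed
    have "card {k. M' *v axis k 1 \<noteq> 0} < n"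
    proof -
      have "card {k. M' *v axis k 1 \<noteq> 0} \<le> card ({k. M *v axis k 1 \<noteq> 0} - {j})"
        by (rule card_mono[OF _ sub]) simp
      also have "\<dots> < card {k. M *v axis k 1 \<noteq> 0}"
        using j by (intro card_Diff1_less) auto
      finally show ?thesis using less.prems(1) by simp
    qed
    then obtain vs where "M' = sum_list (map (\<lambda>v. outer v v) vs)"
      using less.IH \<open>psd M'\<close> by blast
    then have "M = outer q q + sum_list (map (\<lambda>v. outer v v) vs)"
      unfolding M'_def by (metis add.commute diff_add_cancel)
    then show ?thesis
      by (intro exI[of _ "q # vs"]) simp
  qed
qed

lemma gram: "psd (M::real^'m^'m) \<Longrightarrow> \<exists>vs. M = sum_list (map (\<lambda>v. outer v v) vs)"
  using gram_aux by blast

lemma psd_inner_zero: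
  fixes P M :: "real^'m^'m"
  assumes "psd P" "psd M" "P \<bullet> M = 0"
  shows "P ** M = 0"
proof -
  obtain vs where M: "M = sum_list (map (\<lambda>v. outer v v) vs)" using gram[OF assms(2)] by blast
  have "\<forall>v\<in>set vs. v \<bullet> (P *v v) = 0"
  proof -
    have "P \<bullet> M = (\<Sum>v\<leftarrow>vs. v \<bullet> (P *v v))"
      unfolding M by (induction vs) (simp_all add: inner_add_right inner_outer)
    moreover have "\<forall>v\<in>set vs. 0 \<le> v \<bullet> (P *v v)" using assms(1) psd_def by blast
    ultimately show ?thesis using assms(3) sum_list_nonneg_eq_0_iff[of "map (\<lambda>v. v \<bullet> (P *v v)) vs"]
      by auto
  qed
  then have "\<forall>v\<in>set vs. P *v v = 0" using psd_zero[OF assms(1)] by blast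
  then show ?thesis
    unfolding M by (induction vs) (simp_all add: matrix_add_ldistrib mat_mul_outer, simp add: outer_def vec_eq_iff)
qed

lemma matrix_diff_ldistrib: "(A::real^'n^'m) ** (B - C) = A ** B - A ** C"
  by (simp add: matrix_matrix_mult_def vec_eq_iff sum_subtractf right_diff_distrib)

lemma matrix_diff_rdistrib: "((B::real^'n^'m) - C) ** A = B ** A - C ** A"
  by (simp add: matrix_matrix_mult_def vec_eq_iff sum_subtractf left_diff_distrib)

lemma matrix_add_rdistrib: "((B::real^'n^'m) + C) ** A = B ** A + C ** A"
  by (simp add: matrix_matrix_mult_def vec_eq_iff sum.distrib distrib_right)

lemma transpose_diff: "transpose ((A::real^'n^'m) - B) = transpose A - transpose B"
  by (simp add: transpose_def vec_eq_iff)

lemma transpose_zero[simp]: "transpose (0::real^'n^'m) = 0"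
  by (simp add: transpose_def vec_eq_iff)

lemma transpose_add: "transpose ((A::real^'n^'m) + B) = transpose A + transpose B"
  by (simp add: transpose_def vec_eq_iff)

lemma matrix_inv_works:
  fixes A :: "real^'n^'n"
  assumes "invertible A"
  shows "A ** matrix_inv A = mat 1" "matrix_inv A ** A = mat 1"
proof -
  have "\<exists>A'. A ** A' = mat 1 \<and> A' ** A = mat 1" using assms invertible_def by blast
  then have "A ** matrix_inv A = mat 1 \<and> matrix_inv A ** A = mat 1"
    unfolding matrix_inv_def by (rule someI_ex)
  then show "A ** matrix_inv A = mat 1" "matrix_inv A ** A = mat 1" by auto
qed

definition penrose :: "real^'m^'m \<Rightarrow> real^'m^'m \<Rightarrow> bool" where
  "penrose A X \<longleftrightarrow> A ** X ** A = A \<and> X ** A ** X = X \<and>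
      transpose (A ** X) = A ** X \<and> transpose (X ** A) = X ** A"

lemma penrose_unique:
  assumes "penrose A X" "penrose A Y"
  shows "X = Y"
proof -
  have X1: "A ** X ** A = A" and X2: "X ** A ** X = X" and X3: "transpose (A ** X) = A ** X"
    and X4: "transpose (X ** A) = X ** A" using assms(1) penrose_def by auto
  have Y1: "A ** Y ** A = A" and Y2: "Y ** A ** Y = Y" and Y3: "transpose (A ** Y) = A ** Y"
    and Y4: "transpose (Y ** A) = Y ** A" using assms(2) penrose_def by auto
  have AT: "transpose A = transpose A ** transpose Y ** transpose A"
    using arg_cong[OF Y1, of transpose] by (simp add: matrix_transpose_mul matrix_mul_assoc)
  have AT': "transpose A = transpose A ** transpose X ** transpose A"
    using arg_cong[OF X1, of transpose] by (simp add: matrix_transpose_mul matrix_mul_assoc)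
  have "X = X ** (A ** X)" using X2 by (simp add: matrix_mul_assoc)
  also have "\<dots> = X ** transpose (A ** X)" using X3 by simp
  also have "\<dots> = X ** transpose X ** transpose A" by (simp add: matrix_transpose_mul matrix_mul_assoc)
  also have "\<dots> = X ** transpose X ** (transpose A ** transpose Y ** transpose A)" using AT by simp
  also have "\<dots> = X ** (transpose (A ** X)) ** (transpose (A ** Y))"
    by (simp add: matrix_transpose_mul matrix_mul_assoc)
  also have "\<dots> = X ** (A ** X) ** (A ** Y)" using X3 Y3 by simp
  also have "\<dots> = (X ** A ** X) ** A ** Y" by (simp add: matrix_mul_assoc)
  also have "\<dots> = X ** A ** Y" using X2 by simp
  finally have x: "X = X ** A ** Y" .
  have "Y = (Y ** A) ** Y" using Y2 by simp
  also have "\<dots> = transpose (Y ** A) ** Y" using Y4 by simp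
  also have "\<dots> = transpose A ** transpose Y ** Y" by (simp add: matrix_transpose_mul)
  also have "\<dots> = (transpose A ** transpose X ** transpose A) ** transpose Y ** Y" using AT' by simp
  also have "\<dots> = (transpose (X ** A)) ** (transpose (Y ** A)) ** Y"
    by (simp add: matrix_transpose_mul matrix_mul_assoc)
  also have "\<dots> = (X ** A) ** (Y ** A) ** Y" using X4 Y4 by simp
  also have "\<dots> = X ** A ** (Y ** A ** Y)" by (simp add: matrix_mul_assoc)
  also have "\<dots> = X ** A ** Y" using Y2 by simp
  finally show ?thesis using x by simp
qed

lemma outer_mulv: "outer b b *v v = (b \<bullet> v) *\<^sub>R (b::real^'m)"
  by (simp add: outer_def matrix_vector_mult_def inner_vec_def vec_eq_iff sum_distrib_left mult_ac)

lemma matrix_mult_sum_right: "(A::real^'n^'m) ** (\<Sum>b\<in>B. f b) = (\<Sum>b\<in>B. A ** f b)"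
  using sum.swap by (simp add: matrix_matrix_mult_def vec_eq_iff sum_distrib_left sum_component) fastforce

lemma mulv_sum: "(\<Sum>b\<in>B. f b) *v (v::real^'m) = (\<Sum>b\<in>B. (f b :: real^'m^'k) *v v)"
  using sum.swap by (simp add: matrix_vector_mult_def vec_eq_iff sum_distrib_right sum_component) fastforce

lemma transpose_sum: "transpose (\<Sum>b\<in>B. (f b :: real^'m^'k)) = (\<Sum>b\<in>B. transpose (f b))"
  by (simp add: transpose_def vec_eq_iff sum_component)

lemma penrose_exists_sym:
  fixes G0 :: "real^'m^'m"
  assumes sym: "transpose G0 = G0"
  shows "\<exists>X. penrose G0 X"
proof -
  have "subspace {v. G0 *v v = 0}"
    by (auto simp: subspace_def matrix_vector_right_distrib matrix_vector_mult_scaleR)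
  then obtain B where BK: "B \<subseteq> {v. G0 *v v = 0}" and orth: "pairwise orthogonal B"
    and nrm: "\<And>x. x \<in> B \<Longrightarrow> norm x = 1" and ind: "independent B"
    and spn: "span B = {v. G0 *v v = 0}"
    by (rule orthonormal_basis_subspace) blast
  have finB: "finite B" using ind independent_imp_finite by blast
  define Q0 where "Q0 = (\<Sum>b\<in>B. outer b b)"
  have Q0v: "Q0 *v v = (\<Sum>b\<in>B. (b \<bullet> v) *\<^sub>R b)" for v
    by (simp add: Q0_def mulv_sum outer_mulv)
  have GQ: "G0 ** Q0 = 0"
  proof -
    have "G0 ** outer b b = 0" if "b \<in> B" for b
    proof -
      have "G0 *v b = 0" using BK that by auto
      then show ?thesis by (simp add: mat_mul_outer) (simp add: outer_def vec_eq_iff)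
    qed
    then show ?thesis by (simp add: Q0_def matrix_mult_sum_right)
  qed
  have Qsym: "transpose Q0 = Q0" by (simp add: Q0_def transpose_sum outer_sym)
  have QG: "Q0 ** G0 = 0"
    using arg_cong[OF GQ, of transpose] by (simp add: matrix_transpose_mul sym Qsym)
  have Qb: "Q0 *v b = b" if "b \<in> B" for b
  proof -
    have "(\<Sum>c\<in>B. (c \<bullet> b) *\<^sub>R c) = (\<Sum>c\<in>B. if c = b then b else 0)"
    proof (rule sum.cong)
      fix c assume c: "c \<in> B"
      show "(c \<bullet> b) *\<^sub>R c = (if c = b then b else 0)"
      proof (cases "c = b")
        case True
        then have "c \<bullet> b = 1" using nrm[OF that] by (simp add: norm_eq_1)
        then show ?thesis using True by simp
      next
        case False
        then have "c \<bullet> b = 0" using orth c that by (simp add: pairwise_def orthogonal_def)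
        then show ?thesis using False by simp
      qed
    qed simp
    also have "\<dots> = b" using that finB by simp
    finally show ?thesis using Q0v by simp
  qed
  have QQ: "Q0 ** Q0 = Q0"
  proof -
    have Qo: "Q0 ** outer b b = outer b b" if "b \<in> B" for b
      using Qb[OF that] by (simp add: mat_mul_outer)
    have "Q0 ** Q0 = Q0 ** (\<Sum>b\<in>B. outer b b)" by (simp only: Q0_def)
    also have "\<dots> = (\<Sum>b\<in>B. Q0 ** outer b b)" by (rule matrix_mult_sum_right)
    also have "\<dots> = (\<Sum>b\<in>B. outer b b)" using Qo by (intro sum.cong) auto
    also have "\<dots> = Q0" by (simp only: Q0_def)
    finally show ?thesis .
  qed
  have Qker: "Q0 *v v = v" if "G0 *v v = 0" for v
  proof -
    have "v \<in> span B" using spn that by simp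
    then show ?thesis
      using linear_eq_on_span[of "\<lambda>v. Q0 *v v" "\<lambda>v. v" B v] Qb
      by (simp add: matrix_vector_mul_linear linear_id[unfolded id_def])
  qed
  define M where "M = G0 + Q0"
  have "\<forall>v. M *v v = 0 \<longrightarrow> v = 0"
  proof (intro allI impI)
    fix v assume Mv: "M *v v = 0"
    have "Q0 *v (M *v v) = Q0 *v v"
      by (simp add: M_def matrix_vector_mult_add_rdistrib matrix_vector_right_distrib matrix_vector_mul_assoc QG QQ)
    then have Qv: "Q0 *v v = 0" using Mv by simp
    then have "G0 *v v = 0" using Mv by (simp add: M_def matrix_vector_mult_add_rdistrib)
    then show "v = 0" using Qker Qv by simp
  qed
  then obtain Bi where "Bi ** M = mat 1" using matrix_left_invertible_ker by blast
  then have invM: "invertible M" using invertible_left_inverse by blast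
  define Mi where "Mi = matrix_inv M"
  have MMi: "M ** Mi = mat 1" and MiM: "Mi ** M = mat 1" using matrix_inv_works[OF invM] Mi_def by auto
  have MQ: "M ** Q0 = Q0" by (simp add: M_def matrix_add_rdistrib GQ QQ)
  have QM: "Q0 ** M = Q0" by (simp add: M_def matrix_add_ldistrib QG QQ)
  have MiQ: "Mi ** Q0 = Q0"
  proof -
    have "Mi ** Q0 = Mi ** (M ** Q0)" using MQ by simp
    also have "\<dots> = Q0" by (simp add: matrix_mul_assoc MiM)
    finally show ?thesis .
  qed
  have QMi: "Q0 ** Mi = Q0"
  proof -
    have "Q0 ** Mi = (Q0 ** M) ** Mi" using QM by simp
    also have "\<dots> = Q0" by (simp add: matrix_mul_assoc[symmetric] MMi)
    finally show ?thesis .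
  qed
  define X where "X = Mi - Q0"
  have G0M: "G0 = M - Q0" by (simp add: M_def)
  have GX: "G0 ** X = mat 1 - Q0"
  proof -
    have "G0 ** X = G0 ** Mi" by (simp add: X_def matrix_diff_ldistrib GQ)
    also have "\<dots> = mat 1 - Q0" by (simp add: G0M matrix_diff_rdistrib MMi QMi)
    finally show ?thesis .
  qed
  have XG: "X ** G0 = mat 1 - Q0"
  proof -
    have "X ** G0 = Mi ** G0" by (simp add: X_def matrix_diff_rdistrib QG)
    also have "\<dots> = mat 1 - Q0" by (simp add: G0M matrix_diff_ldistrib MiM MiQ)
    finally show ?thesis .
  qed
  have "penrose G0 X"
    unfolding penrose_def
  proof (intro conjI)
    show "G0 ** X ** G0 = G0" by (simp add: GX matrix_diff_rdistrib QG)
    show "X ** G0 ** X = X"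
    proof -
      have "X ** G0 ** X = X - Q0 ** X" by (simp add: XG matrix_diff_rdistrib)
      also have "Q0 ** X = 0" by (simp add: X_def matrix_diff_ldistrib QMi QQ)
      finally show ?thesis by simp
    qed
    show "transpose (G0 ** X) = G0 ** X" by (simp add: GX transpose_diff Qsym)
    show "transpose (X ** G0) = X ** G0" by (simp add: XG transpose_diff Qsym)
  qed
  then show ?thesis by blast
qed

lemma mp_inverse_sym:
  fixes G0 :: "real^'m^'m"
  assumes "transpose G0 = G0"
  shows "G0 ** mp_inverse G0 ** G0 = G0"
proof -
  obtain X where X: "penrose G0 X" using penrose_exists_sym[OF assms] by blast
  have "penrose G0 (mp_inverse G0)"
    unfolding mp_inverse_def penrose_def[symmetric]
    by (rule theI[of "penrose G0", OF X penrose_unique[OF _ X]])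
  then show ?thesis by (simp add: penrose_def)
qed

definition PI :: "'m set \<Rightarrow> real^'m^'m" where
  "PI S = (\<chi> a b. if a = b \<and> a \<in> S then 1 else 0)"

lemma PI_left: "(PI S ** M) $ a $ b = (if a \<in> S then M $ a $ b else 0)"
proof -
  have "(\<Sum>k\<in>UNIV. (if a = k \<and> a \<in> S then 1 else 0) * M $ k $ b) = (\<Sum>k\<in>UNIV. if k = a then (if a \<in> S then M $ a $ b else 0) else 0)"
    by (rule sum.cong) auto
  then show ?thesis by (simp add: PI_def matrix_matrix_mult_def)
qed

lemma PI_right: "(M ** PI S) $ a $ b = (if b \<in> S then M $ a $ b else 0)"
proof -
  have "(\<Sum>k\<in>UNIV. M $ a $ k * (if k = b \<and> k \<in> S then 1 else 0)) = (\<Sum>k\<in>UNIV. if k = b then (if b \<in> S then M $ a $ b else 0) else 0)"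
    by (rule sum.cong) auto
  then show ?thesis by (simp add: PI_def matrix_matrix_mult_def)
qed

lemma PI_mulv: "(PI S *v v) $ a = (if a \<in> S then v $ a else 0)"
proof -
  have "(\<Sum>k\<in>UNIV. (if a = k \<and> a \<in> S then 1 else 0) * v $ k) = (\<Sum>k\<in>UNIV. if k = a then (if a \<in> S then v $ a else 0) else 0)"
    by (rule sum.cong) auto
  then show ?thesis by (simp add: PI_def matrix_vector_mult_def)
qed

lemma PI_idem: "PI S ** PI S = PI S"
  by (simp add: vec_eq_iff PI_left) (simp add: PI_def)

lemma PI_compl: "PI S + PI (- S) = mat 1"
  by (simp add: PI_def mat_def vec_eq_iff)

lemma PI_orth1: "PI S ** PI (- S) = 0"
  by (simp add: vec_eq_iff PI_left) (simp add: PI_def)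

lemma PI_orth2: "PI (- S) ** PI S = 0"
  by (simp add: vec_eq_iff PI_left) (simp add: PI_def)

lemma PI_sym: "transpose (PI S) = PI S"
  by (simp add: PI_def transpose_def vec_eq_iff)

lemma assoc_l: "A ** B = C \<Longrightarrow> X ** A ** B = X ** C"
  by (simp add: matrix_mul_assoc[symmetric])

lemma padA_left: "PI I ** padA I X = PI I ** X ** PI I"
  by (simp add: vec_eq_iff PI_left PI_right) (simp add: padA_def)

lemma padA_right: "padA I X ** PI I = PI I ** X ** PI I"
  by (simp add: vec_eq_iff PI_left PI_right) (auto simp add: padA_def)

definition Zm :: "'m set \<Rightarrow> real^'m^'m \<Rightarrow> real^'m^'m" where
  "Zm I G0 = PI I ** matrix_inv (padA I G0) ** PI I"
definition Wm :: "'m set \<Rightarrow> real^'m^'m \<Rightarrow> real^'m^'m" where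
  "Wm I G0 = Zm I G0 ** G0 ** PI (- I)"
definition Em :: "'m set \<Rightarrow> real^'m^'m \<Rightarrow> real^'m^'m" where
  "Em I G0 = PI (- I) - Wm I G0"

lemma Em_alt: "Em I G0 = PI (- I) - PI I ** (matrix_inv (padA I G0) ** PI I ** G0 ** PI (- I))"
  by (simp add: Em_def Wm_def Zm_def matrix_mul_assoc)

lemma sum_if_in: "(\<Sum>a\<in>UNIV. if a \<in> S then f a else 0) = (\<Sum>a\<in>S. f a)"
  for f :: "'m::finite \<Rightarrow> real"
  by (simp add: sum.If_cases)

lemma sum3_swap: "(\<Sum>i\<in>A. \<Sum>j\<in>B. \<Sum>k\<in>C. f i j k) = (\<Sum>k\<in>C. \<Sum>j\<in>B. \<Sum>i\<in>A. (f i j k::real))"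
proof -
  have "(\<Sum>i\<in>A. \<Sum>j\<in>B. \<Sum>k\<in>C. f i j k) = (\<Sum>i\<in>A. \<Sum>k\<in>C. \<Sum>j\<in>B. f i j k)"
    by (rule sum.cong[OF refl]) (rule sum.swap)
  also have "\<dots> = (\<Sum>k\<in>C. \<Sum>i\<in>A. \<Sum>j\<in>B. f i j k)" by (rule sum.swap)
  also have "\<dots> = (\<Sum>k\<in>C. \<Sum>j\<in>B. \<Sum>i\<in>A. f i j k)"
    by (rule sum.cong[OF refl]) (rule sum.swap)
  finally show ?thesis .
qed
lemma sum3_swap23: "(\<Sum>i\<in>A. \<Sum>j\<in>B. \<Sum>k\<in>C. f i j k) = (\<Sum>i\<in>A. \<Sum>k\<in>C. \<Sum>j\<in>B. (f i j k::real))"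
  by (rule sum.cong[OF refl]) (rule sum.swap)

lemma inner_mult_left: "((A::real^'n^'m) ** (B::real^'p^'n)) \<bullet> C = B \<bullet> (transpose A ** C)"
proof -
  have "((A::real^'n^'m) ** (B::real^'p^'n)) \<bullet> C = (\<Sum>i\<in>UNIV. \<Sum>j\<in>UNIV. \<Sum>k\<in>UNIV. A$i$k * B$k$j * C$i$j)"
    by (simp add: inner_mat_sum matrix_matrix_mult_def sum_distrib_right)
  also have "\<dots> = (\<Sum>k\<in>UNIV. \<Sum>j\<in>UNIV. \<Sum>i\<in>UNIV. A$i$k * B$k$j * C$i$j)"
    by (rule sum3_swap)
  also have "\<dots> = B \<bullet> (transpose A ** C)"
    by (simp add: inner_mat_sum matrix_matrix_mult_def transpose_def sum_distrib_left mult_ac)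
  finally show ?thesis .
qed
lemma inner_mult_right: "((A::real^'n^'m) ** (B::real^'p^'n)) \<bullet> C = A \<bullet> (C ** transpose B)"
proof -
  have "((A::real^'n^'m) ** (B::real^'p^'n)) \<bullet> C = (\<Sum>i\<in>UNIV. \<Sum>j\<in>UNIV. \<Sum>k\<in>UNIV. A$i$k * B$k$j * C$i$j)"
    by (simp add: inner_mat_sum matrix_matrix_mult_def sum_distrib_right)
  also have "\<dots> = (\<Sum>i\<in>UNIV. \<Sum>k\<in>UNIV. \<Sum>j\<in>UNIV. A$i$k * B$k$j * C$i$j)"
    by (rule sum3_swap23)
  also have "\<dots> = A \<bullet> (C ** transpose B)"
    by (simp add: inner_mat_sum matrix_matrix_mult_def transpose_def sum_distrib_left mult_ac)
  finally show ?thesis .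
qed
lemma inner_congr: "((A::real^'n^'m) ** B ** transpose A) \<bullet> M = B \<bullet> (transpose A ** M ** A)"
proof -
  have "((A::real^'n^'m) ** B ** transpose A) \<bullet> M = (A ** B) \<bullet> (M ** A)"
    using inner_mult_right[of "A ** B" "transpose A" M] by simp
  also have "\<dots> = B \<bullet> (transpose A ** (M ** A))" by (rule inner_mult_left)
  finally show ?thesis by (simp add: matrix_mul_assoc)
qed

locale blk =
  fixes G0 :: "real^'m^'m" and I :: "'m set"
  assumes sym: "transpose G0 = G0" and inv: "invertible (padA I G0)"
begin

abbreviation "P \<equiv> PI I"
abbreviation "Q \<equiv> PI (- I)"
abbreviation "Y \<equiv> matrix_inv (padA I G0)"
abbreviation "Z \<equiv> Zm I G0"
abbreviation "W \<equiv> Wm I G0"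
abbreviation "E \<equiv> Em I G0"

lemma PP: "P ** P = P" and QQ: "Q ** Q = Q" and PQ: "P ** Q = 0" and QP: "Q ** P = 0"
  and PQ1: "P + Q = mat 1" and Psym: "transpose P = P" and Qsym: "transpose Q = Q"
  using PI_idem PI_orth1 PI_orth2 PI_compl PI_sym by (auto simp: PI_orth2[of I, simplified])

lemma PQ1': "Q = mat 1 - P" using PQ1 by (metis add_diff_cancel_left')

lemma PGZ: "P ** G0 ** Z = P"
proof -
  have "P ** (padA I G0 ** Y) ** P = P" using matrix_inv_works(1)[OF inv] PP by simp
  then have "(P ** padA I G0) ** Y ** P = P" by (simp add: matrix_mul_assoc)
  then show ?thesis by (simp add: padA_left Zm_def matrix_mul_assoc PP)
qed

lemma ZGP: "Z ** G0 ** P = P"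
proof -
  have "P ** (Y ** padA I G0) ** P = P" using matrix_inv_works(2)[OF inv] PP by simp
  then have "P ** Y ** (padA I G0 ** P) = P" by (simp add: matrix_mul_assoc)
  then show ?thesis by (simp add: padA_right Zm_def matrix_mul_assoc PP)
qed

lemma PZ: "P ** Z = Z" and ZP: "Z ** P = Z" and QZ: "Q ** Z = 0" and ZQ: "Z ** Q = 0"
  by (simp_all add: Zm_def matrix_mul_assoc PP assoc_l[OF PP] QP)
    (simp_all add: matrix_mul_assoc[symmetric] PQ)

lemma Zsym: "transpose Z = Z"
proof -
  have PZT: "P ** transpose Z = transpose Z"
    using arg_cong[OF ZP, of transpose] by (simp add: matrix_transpose_mul Psym)
  have ZTP: "transpose Z ** P = transpose Z"
    using arg_cong[OF PZ, of transpose] by (simp add: matrix_transpose_mul Psym)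
  have PGZT: "P ** G0 ** transpose Z = P"
    using arg_cong[OF ZGP, of transpose] by (simp add: matrix_transpose_mul Psym sym matrix_mul_assoc)
  have "transpose Z = P ** transpose Z" using PZT by simp
  also have "\<dots> = Z ** G0 ** P ** transpose Z" using ZGP by simp
  also have "\<dots> = (Z ** P) ** G0 ** transpose Z"
  proof -
    have "Z ** G0 ** P ** transpose Z = Z ** G0 ** transpose Z" using PZT by (simp add: matrix_mul_assoc[symmetric])
    also have "\<dots> = (Z ** P) ** G0 ** transpose Z" using ZP by simp
    finally show ?thesis .
  qed
  also have "\<dots> = Z ** (P ** G0 ** transpose Z)" by (simp add: matrix_mul_assoc)
  also have "\<dots> = Z" using PGZT ZP by simp
  finally show ?thesis by simp
qed

lemma PW: "P ** W = W" and WQ: "W ** Q = W" and QW: "Q ** W = 0" and WP: "W ** P = 0"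
  and WW: "W ** W = 0"
proof -
  show PW: "P ** W = W" by (simp add: Wm_def matrix_mul_assoc PZ)
  show WQ: "W ** Q = W" by (simp add: Wm_def matrix_mul_assoc[symmetric] QQ)
  show "Q ** W = 0" by (simp add: Wm_def matrix_mul_assoc QZ)
  show WP: "W ** P = 0" by (simp add: Wm_def matrix_mul_assoc[symmetric] QP)
  have "W ** W = W ** (P ** W)" using PW by simp
  also have "\<dots> = (W ** P) ** W" by (simp add: matrix_mul_assoc)
  finally show "W ** W = 0" using WP by simp
qed

lemma WT: "transpose W = Q ** G0 ** Z"
  by (simp add: Wm_def matrix_transpose_mul Qsym sym Zsym matrix_mul_assoc)

lemma E_alt: "E = Q - W" by (simp add: Em_def)

lemma PE: "P ** E = - W"
  by (simp add: E_alt matrix_diff_ldistrib PQ PW)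

lemma QE: "Q ** E = Q"
  by (simp add: E_alt matrix_diff_ldistrib QQ QW)

lemma EQ: "E ** Q = E"
  by (simp add: E_alt matrix_diff_rdistrib QQ WQ)

lemma PGE: "P ** G0 ** E = 0"
proof -
  have "P ** G0 ** W = P ** G0 ** Q"
    by (simp add: Wm_def matrix_mul_assoc PGZ)
  then show ?thesis by (simp add: E_alt matrix_diff_ldistrib)
qed

lemma ET: "transpose E = Q - transpose W"
  by (simp add: E_alt transpose_diff Qsym)

lemma GZ: "G0 ** Z = P + transpose W"
proof -
  have "G0 ** Z = (P + Q) ** G0 ** Z" by (simp add: PQ1)
  also have "\<dots> = P ** G0 ** Z + Q ** G0 ** Z" by (simp add: matrix_add_rdistrib)
  finally show ?thesis by (simp add: PGZ WT)
qed

lemma ETGE: "transpose E ** G0 ** E = Q ** G0 ** E"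
proof -
  have "transpose W ** G0 ** E = transpose W ** (P ** G0 ** E)"
  proof -
    have "transpose W = transpose W ** P"
      using arg_cong[OF PW, of transpose] by (simp add: matrix_transpose_mul Psym)
    then have "transpose W ** G0 ** E = transpose W ** P ** G0 ** E" by simp
    then show ?thesis by (simp add: matrix_mul_assoc)
  qed
  then show ?thesis by (simp add: ET matrix_diff_rdistrib PGE)
qed

lemma kerE: "G0 *v v = 0 \<Longrightarrow> E *v v = v"
proof -
  assume v: "G0 *v v = 0"
  have "Z ** G0 ** (P + Q) *v v = 0" using v by (simp add: PQ1 matrix_vector_mul_assoc[symmetric])
  then have "P *v v + W *v v = 0"
    by (simp add: matrix_add_ldistrib ZGP Wm_def matrix_vector_mult_add_rdistrib)
  then have "P *v v = - (W *v v)" by (simp add: eq_neg_iff_add_eq_0)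
  moreover have "v = P *v v + Q *v v"
    using PQ1 by (metis matrix_vector_mul_lid matrix_vector_mult_add_rdistrib)
  ultimately show "E *v v = v"
    by (simp add: E_alt matrix_vector_mult_diff_rdistrib)
qed

end

lemma quad_congr: "(transpose A ** M ** A) $ j $ k = (A *v axis j 1) \<bullet> (M *v (A *v axis k 1))"
  for A M :: "real^'m^'m"
proof -
  have "(transpose A ** M ** A) $ j $ k = ((transpose A ** M ** A) *v axis k 1) $ j"
    using col_entry[of "transpose A ** M ** A" k j] by simp
  also have "\<dots> = axis j 1 \<bullet> (transpose A *v (M *v (A *v axis k 1)))"
    by (simp add: matrix_vector_mul_assoc matrix_mul_assoc inner_axis')
  also have "\<dots> = (axis j 1 v* transpose A) \<bullet> (M *v (A *v axis k 1))"
    by (rule dot_lmul_matrix[symmetric])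
  also have "\<dots> = (A *v axis j 1) \<bullet> (M *v (A *v axis k 1))"
    by (simp only: vector_transpose_matrix)
  finally show ?thesis .
qed

lemma zero_by_cols: "(\<forall>k. (S::real^'m^'m) *v axis k 1 = 0) \<Longrightarrow> S = 0"
  by (simp add: vec_eq_iff) (metis col_entry zero_index)

lemma range_PI: "range (\<lambda>x. PI S *v x) = {x::real^'m. \<forall>i. i \<notin> S \<longrightarrow> x$i = 0}"
proof
  show "range (\<lambda>x. PI S *v x) \<subseteq> {x. \<forall>i. i \<notin> S \<longrightarrow> x $ i = 0}" by (auto simp: PI_mulv)
  show "{x. \<forall>i. i \<notin> S \<longrightarrow> x $ i = 0} \<subseteq> range (\<lambda>x. PI S *v x)"
  proof
    fix x :: "real^'m" assume "x \<in> {x. \<forall>i. i \<notin> S \<longrightarrow> x $ i = 0}"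
    then have "PI S *v x = x" by (auto simp: vec_eq_iff PI_mulv)
    then show "x \<in> range (\<lambda>x. PI S *v x)" by (metis rangeI)
  qed
qed

lemma dim_substd: "dim {x::real^'m. \<forall>i. i \<notin> S \<longrightarrow> x$i = 0} = card S"
proof -
  have "vec.dim {x::real^'m. \<forall>i. i \<notin> S \<longrightarrow> x$i = 0} = card S" by (rule dim_substandard_cart)
  then show ?thesis by (simp add: dim_vec_eq)
qed

context blk
begin

lemma symE: "G0 $ a $ b = G0 $ b $ a"
proof -
  have "transpose G0 $ b $ a = G0 $ b $ a" using sym by simp
  then show ?thesis by (simp add: transpose_def)
qed

lemma Z_entry: "Z $ a $ b = (if a \<in> I \<and> b \<in> I then Y $ a $ b else 0)"
  by (simp add: Zm_def PI_left PI_right)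

lemma GZG_entry: "(G0 ** Z ** G0) $ j $ k = (\<Sum>a\<in>I. \<Sum>b\<in>I. G0$a$j * Y$a$b * G0$b$k)"
proof -
  have "(G0 ** Z ** G0) $ j $ k = (\<Sum>b\<in>UNIV. \<Sum>a\<in>UNIV. G0$j$a * Z$a$b * G0$b$k)"
    by (simp add: matrix_matrix_mult_def sum_distrib_right)
  also have "\<dots> = (\<Sum>b\<in>UNIV. if b \<in> I then (\<Sum>a\<in>UNIV. if a \<in> I then G0$j$a * Y$a$b * G0$b$k else 0) else 0)"
    by (rule sum.cong[OF refl]) (auto simp: Z_entry intro: sum.cong)
  also have "\<dots> = (\<Sum>b\<in>I. \<Sum>a\<in>I. G0$j$a * Y$a$b * G0$b$k)"
    by (simp add: sum_if_in)
  also have "\<dots> = (\<Sum>a\<in>I. \<Sum>b\<in>I. G0$a$j * Y$a$b * G0$b$k)"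
    by (subst sum.swap) (simp add: symE[of j])
  finally show ?thesis .
qed

lemma schur_eq:
  "(\<chi> j k. if j \<notin> I \<and> k \<notin> I then G0$j$k - (\<Sum>a\<in>I. \<Sum>b\<in>I. G0$a$j * Y$a$b * G0$b$k) else 0)
     = transpose E ** G0 ** E"
proof -
  have "transpose E ** G0 ** E = Q ** G0 ** E" by (rule ETGE)
  also have "\<dots> = Q ** G0 ** Q - Q ** G0 ** W" by (simp add: E_alt matrix_diff_ldistrib)
  also have "\<dots> = Q ** G0 ** Q - Q ** (G0 ** Z ** G0) ** Q" by (simp add: Wm_def matrix_mul_assoc)
  also have "\<dots> = (\<chi> j k. if j \<notin> I \<and> k \<notin> I then G0$j$k - (\<Sum>a\<in>I. \<Sum>b\<in>I. G0$a$j * Y$a$b * G0$b$k) else 0)"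
    by (simp add: vec_eq_iff PI_left PI_right GZG_entry)
  finally show ?thesis by simp
qed

lemma rank_schur_zero:
  assumes rk: "rank G0 = card I"
  shows "Q ** G0 ** E = 0"
proof (rule ccontr)
  define S where "S = Q ** G0 ** E"
  assume "Q ** G0 ** E \<noteq> 0"
  then have "S \<noteq> 0" using S_def by simp
  then obtain k where k: "S *v axis k 1 \<noteq> 0" using zero_by_cols by blast
  define Et where "Et = mat 1 - W"
  define D where "D = transpose Et ** G0 ** Et"
  have WTP: "transpose W ** P = transpose W"
    using arg_cong[OF PW, of transpose] by (simp add: matrix_transpose_mul Psym)
  have EtQ: "Et ** Q = E" by (simp add: Et_def matrix_diff_rdistrib WQ E_alt)
  have WZ: "W ** Z = 0"
  proof -
    have "W ** Z = W ** (Q ** Z)" using WQ by (simp add: matrix_mul_assoc)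
    then show ?thesis using QZ by simp
  qed
  have EtZ: "Et ** Z = Z" by (simp add: Et_def matrix_diff_rdistrib WZ)
  have GE: "G0 ** E = S"
  proof -
    have "G0 ** E = (P + Q) ** G0 ** E" by (simp add: PQ1)
    also have "\<dots> = S" by (simp add: matrix_add_rdistrib PGE S_def)
    finally show ?thesis .
  qed
  have WTGE: "transpose W ** G0 ** E = 0"
  proof -
    have "transpose W ** G0 ** E = transpose W ** (P ** G0 ** E)"
      using WTP by (metis matrix_mul_assoc)
    then show ?thesis by (simp add: PGE)
  qed
  have DQ: "D ** Q = S"
  proof -
    have "D ** Q = transpose Et ** G0 ** E" by (simp add: D_def matrix_mul_assoc[symmetric] EtQ)
    also have "\<dots> = G0 ** E - transpose W ** G0 ** E"
      by (simp add: Et_def transpose_diff matrix_diff_rdistrib)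
    finally show ?thesis by (simp add: WTGE GE)
  qed
  have DZ: "D ** Z = P"
  proof -
    have "D ** Z = transpose Et ** (G0 ** Z)" by (simp add: D_def matrix_mul_assoc[symmetric] EtZ)
    also have "\<dots> = (mat 1 - transpose W) ** (P + transpose W)" by (simp add: Et_def transpose_diff GZ)
    also have "\<dots> = P + transpose W - transpose W ** P - transpose W ** transpose W"
      by (simp add: matrix_diff_rdistrib matrix_add_ldistrib)
    also have "transpose W ** transpose W = 0"
      by (metis WW matrix_transpose_mul transpose_zero)
    finally show ?thesis by (simp add: WTP)
  qed
  have rD: "rank D \<le> card I"
    using rank_mul_le_left[of "transpose Et ** G0" Et] rank_mul_le_right[of "transpose Et" G0] rk
    by (simp add: D_def)
  have sub1: "range (\<lambda>x. P *v x) \<subseteq> range (\<lambda>x. D *v x)"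
  proof
    fix y assume "y \<in> range (\<lambda>x. P *v x)"
    then obtain x where "y = P *v x" by blast
    then have "y = D *v (Z *v x)" by (simp add: matrix_vector_mul_assoc DZ)
    then show "y \<in> range (\<lambda>x. D *v x)" by blast
  qed
  have Sk: "S *v axis k 1 = D *v (Q *v axis k 1)" by (simp add: matrix_vector_mul_assoc DQ)
  have QS: "Q ** S = S" by (simp add: S_def matrix_mul_assoc QQ)
  have notin: "S *v axis k 1 \<notin> span (range (\<lambda>x. P *v x))"
  proof
    assume "S *v axis k 1 \<in> span (range (\<lambda>x. P *v x))"
    moreover have "subspace (range (\<lambda>x. P *v x))"
      by (auto simp: range_PI subspace_def)
    ultimately obtain z where "S *v axis k 1 = P *v z" by (metis span_eq_iff rangeE)
    then have "Q *v (S *v axis k 1) = Q *v (P *v z)" by simp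
    then have "S *v axis k 1 = 0" by (simp add: matrix_vector_mul_assoc QS QP)
    then show False using k by simp
  qed
  have "dim (insert (S *v axis k 1) (range (\<lambda>x. P *v x))) = card I + 1"
    using notin by (simp add: dim_insert range_PI dim_substd)
  moreover have "insert (S *v axis k 1) (range (\<lambda>x. P *v x)) \<subseteq> range (\<lambda>x. D *v x)"
    using sub1 Sk by auto
  ultimately have "card I + 1 \<le> dim (range (\<lambda>x. D *v x))" by (metis dim_subset)
  then show False using rD rank_dim_range[of D] by simp
qed

end

lemma inner_mulv_transpose: "v \<bullet> ((A::real^'n^'k) *v w) = (transpose A *v v) \<bullet> w"
  by (simp add: dot_lmul_matrix[symmetric])

lemma psd_congr:
  assumes "psd L"
  shows "0 \<le> v \<bullet> ((A ** L ** transpose A) *v v)"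
proof -
  have eq: "v \<bullet> ((A ** L ** transpose A) *v v) = (transpose A *v v) \<bullet> (L *v (transpose A *v v))"
    by (simp add: matrix_vector_mul_assoc[symmetric] inner_mulv_transpose[of v A])
  have "0 \<le> (transpose A *v v) \<bullet> (L *v (transpose A *v v))" using assms psd_def by blast
  then show ?thesis using eq by simp
qed

context blk
begin

lemma lambda_decomp:
  assumes LG: "L ** G0 = 0" and Ls: "transpose L = L"
  defines "\<Phi> \<equiv> (mat 1 + W) ** L ** transpose (mat 1 + W)"
  shows "L = E ** \<Phi> ** transpose E" "Q ** \<Phi> = \<Phi>" "\<Phi> ** Q = \<Phi>" "transpose \<Phi> = \<Phi>"
proof -
  have WTP: "transpose W ** P = transpose W"
    using arg_cong[OF PW, of transpose] by (simp add: matrix_transpose_mul Psym)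
  have LPW: "L ** (P + transpose W) = 0"
  proof -
    have "L ** (G0 ** Z) = 0" using LG by (simp add: matrix_mul_assoc)
    then show ?thesis by (simp add: GZ)
  qed
  have T1W: "transpose (mat 1 + W) = mat 1 + transpose W" by (simp add: transpose_add)
  have PhiP: "\<Phi> ** P = 0"
  proof -
    have "\<Phi> ** P = (mat 1 + W) ** L ** ((mat 1 + transpose W) ** P)"
      by (simp add: \<Phi>_def T1W matrix_mul_assoc)
    also have "(mat 1 + transpose W) ** P = P + transpose W" by (simp add: matrix_add_rdistrib WTP)
    finally show ?thesis using LPW by (simp add: matrix_mul_assoc[symmetric])
  qed
  show PhiQ: "\<Phi> ** Q = \<Phi>"
  proof -
    have "\<Phi> = \<Phi> ** (P + Q)" by (simp add: PQ1)
    also have "\<dots> = \<Phi> ** Q" by (simp add: matrix_add_ldistrib PhiP)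
    finally show ?thesis by simp
  qed
  show PhiT: "transpose \<Phi> = \<Phi>"
    by (simp add: \<Phi>_def matrix_transpose_mul Ls matrix_mul_assoc)
  show QPhi: "Q ** \<Phi> = \<Phi>"
    using arg_cong[OF PhiQ, of transpose] by (simp add: matrix_transpose_mul PhiT Qsym)
  have inv1: "(mat 1 - W) ** (mat 1 + W) = mat 1"
    by (simp add: matrix_add_ldistrib matrix_diff_rdistrib WW)
  have "(mat 1 - W) ** \<Phi> ** transpose (mat 1 - W) = L"
  proof -
    have "(mat 1 - W) ** \<Phi> ** transpose (mat 1 - W)
        = ((mat 1 - W) ** (mat 1 + W)) ** L ** transpose ((mat 1 - W) ** (mat 1 + W))"
      by (simp add: \<Phi>_def matrix_transpose_mul matrix_mul_assoc)
    then show ?thesis by (simp add: inv1)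
  qed
  moreover have "(mat 1 - W) ** \<Phi> ** transpose (mat 1 - W) = E ** \<Phi> ** transpose E"
  proof -
    have e1: "(mat 1 - W) ** Q = E" by (simp add: matrix_diff_rdistrib WQ E_alt)
    have "(mat 1 - W) ** \<Phi> ** transpose (mat 1 - W) = (mat 1 - W) ** (Q ** \<Phi> ** Q) ** transpose (mat 1 - W)"
      using QPhi PhiQ by (simp add: matrix_mul_assoc)
    also have "\<dots> = ((mat 1 - W) ** Q) ** \<Phi> ** transpose ((mat 1 - W) ** Q)"
      by (simp add: matrix_transpose_mul Qsym matrix_mul_assoc)
    finally show ?thesis using e1 by simp
  qed
  ultimately show "L = E ** \<Phi> ** transpose E" by simp
qed

lemma phi_pd:
  assumes psdL: "psd L" and rkL: "rank L = CARD('m) - card I"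
    and Ldec: "L = E ** \<Phi> ** transpose E" and QPhi: "Q ** \<Phi> = \<Phi>" and PhiT: "transpose \<Phi> = \<Phi>"
    and Phidef: "\<Phi> = (mat 1 + W) ** L ** transpose (mat 1 + W)"
  shows "psd \<Phi>" "pd_on (- I) \<Phi>"
proof -
  show psdPhi: "psd \<Phi>"
    unfolding psd_def using PhiT psd_congr[OF psdL, of _ "mat 1 + W"] Phidef by simp
  show "pd_on (- I) \<Phi>"
    unfolding pd_on_def
  proof (intro allI impI)
    fix v :: "real^'m"
    assume vs: "\<forall>i. i \<notin> - I \<longrightarrow> v $ i = 0" and v0: "v \<noteq> 0"
    show "0 < v \<bullet> (\<Phi> *v v)"
    proof (rule ccontr)
      assume "\<not> 0 < v \<bullet> (\<Phi> *v v)"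
      moreover have "0 \<le> v \<bullet> (\<Phi> *v v)" using psdPhi psd_def by blast
      ultimately have "v \<bullet> (\<Phi> *v v) = 0" by simp
      then have Phiv: "\<Phi> *v v = 0" using psd_zero[OF psdPhi] by blast
      define B where "B = {x::real^'m. \<forall>i. i \<notin> - I \<longrightarrow> x$i = 0}"
      have vB: "v \<in> B" using vs B_def by simp
      have subB: "subspace B" by (auto simp: B_def subspace_def)
      have dimB: "dim B = card (- I)" unfolding B_def by (rule dim_substd)
      have "dim {y \<in> B. \<forall>x \<in> span {v}. orthogonal x y} + dim (span {v}) = dim B"
        using vB subB by (intro dim_subspace_orthogonal_to_vectors) (auto simp: span_minimal)
      then have d1: "dim {y \<in> B. \<forall>x \<in> span {v}. orthogonal x y} + 1 = card (- I)"
        using v0 dimB by (simp add: dim_span)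
      have rsub: "range (\<lambda>x. \<Phi> *v x) \<subseteq> {y \<in> B. \<forall>x \<in> span {v}. orthogonal x y}"
      proof clarify
        fix z
        have inB: "\<Phi> *v z \<in> B"
        proof -
          have "\<Phi> *v z = Q *v (\<Phi> *v z)" using QPhi by (simp add: matrix_vector_mul_assoc)
          then have "(\<Phi> *v z) $ i = 0" if "i \<notin> - I" for i
          proof -
            have "(\<Phi> *v z) $ i = (Q *v (\<Phi> *v z)) $ i" using \<open>\<Phi> *v z = Q *v (\<Phi> *v z)\<close> by simp
            also have "\<dots> = 0" using that by (simp only: PI_mulv if_False)
            finally show ?thesis .
          qed
          then show ?thesis unfolding B_def by blast
        qed
        moreover have "orthogonal x (\<Phi> *v z)" if xs: "x \<in> span {v}" for x
        proof -
          obtain c where "x = c *\<^sub>R v" using xs by (auto simp: span_singleton)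
          moreover have "v \<bullet> (\<Phi> *v z) = 0" using sym_quad[OF PhiT, of v z] Phiv by simp
          ultimately show ?thesis by (simp add: orthogonal_def)
        qed
        ultimately show "\<Phi> *v z \<in> B \<and> (\<forall>x\<in>span {v}. orthogonal x (\<Phi> *v z))" by blast
      qed
      have "rank \<Phi> \<le> card (- I) - 1"
        using dim_subset[OF rsub] d1 rank_dim_range[of \<Phi>] by simp
      moreover have "rank L \<le> rank \<Phi>"
        using rank_mul_le_left[of "E ** \<Phi>" "transpose E"] rank_mul_le_right[of E \<Phi>] Ldec by simp
      moreover have "card (- I) = CARD('m) - card I"
        by (simp add: Compl_eq_Diff_UNIV card_Diff_subset)
      moreover have "card (- I) \<ge> 1"
      proof -
        obtain i where "v $ i \<noteq> 0" using v0 by (auto simp: vec_eq_iff)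
        then have "i \<in> - I" using vs by blast
        then have "- I \<noteq> {}" by blast
        then show ?thesis by (simp add: Suc_leI card_gt_0_iff)
      qed
      ultimately show False using rkL by linarith
    qed
  qed
qed

end

definition polymat :: "(real^'n \<Rightarrow> real^'m^'k) \<Rightarrow> bool" where
  "polymat M \<longleftrightarrow> (\<forall>a b. (\<lambda>x. M x $ a $ b) \<in> poly_fun)"

definition pd :: "(real^'n \<Rightarrow> real) \<Rightarrow> real^'n \<Rightarrow> real^'n \<Rightarrow> real" where
  "pd p x v = (\<Sum>i\<in>UNIV. v$i * partial p i x)"

lemma pd_has_derivative: "p \<in> poly_fun \<Longrightarrow> (p has_derivative pd p x) (at x)"
  unfolding pd_def[abs_def] using poly_fun_has_derivative by blast

lemma pd_poly: "p \<in> poly_fun \<Longrightarrow> (\<lambda>x. pd p x v) \<in> poly_fun"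
  unfolding pd_def by (intro poly_fun_sum poly_fun_cmult poly_fun_partial) auto

lemma pd_axis: "pd p x (axis i 1) = partial p i x"
  unfolding pd_def by (rule sum_axis_mult)

lemma polymat_has_derivative:
  assumes "polymat M"
  shows "(M has_derivative (\<lambda>h. dirder M x h)) (at x)"
proof -
  have ent: "((\<lambda>y. M y $ a $ b) has_derivative pd (\<lambda>y. M y $ a $ b) x) (at x)" for a b
    using assms pd_has_derivative polymat_def by blast
  then have D: "(M has_derivative (\<lambda>h. \<chi> a b. pd (\<lambda>y. M y $ a $ b) x h)) (at x)"
    by (rule has_derivative_matrixI)
  then have "M differentiable (at x)" using differentiable_def by blast
  have "dirder M x h = (\<chi> a b. pd (\<lambda>y. M y $ a $ b) x h)" for h
    using has_derivative_dirder[OF D, of h] by simp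
  then show ?thesis using D by simp
qed

lemma polymat_partial:
  assumes "polymat M"
  shows "partial M i x $ a $ b = partial (\<lambda>y. M y $ a $ b) i x"
  using partial_entry polymat_has_derivative[OF assms] differentiable_def by blast

lemma polymat_dirder: "polymat M \<Longrightarrow> polymat (\<lambda>x. dirder M x v)"
proof -
  assume pm: "polymat M"
  have "dirder M x v $ a $ b = pd (\<lambda>y. M y $ a $ b) x v" for x a b
    by (simp add: dirder_def pd_def polymat_partial[OF pm] sum_component)
  then have "(\<lambda>x. dirder M x v $ a $ b) = (\<lambda>x. pd (\<lambda>y. M y $ a $ b) x v)" for a b
    by (rule ext)
  then show ?thesis
    using pm pd_poly unfolding polymat_def by (simp add: pd_poly)
qed

lemma dirder_linear: "dirder M x (a *\<^sub>R v + b *\<^sub>R w) = a *\<^sub>R dirder M x v + b *\<^sub>R dirder M x w"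
  by (simp add: dirder_def scaleR_add_left scaleR_sum_right sum.distrib)

lemma hess_quad:
  fixes F :: "real^'n \<Rightarrow> real"
  assumes U: "open U" "u \<in> U"
    and F1: "\<And>y. y \<in> U \<Longrightarrow> (F has_derivative F' y) (at y)"
    and F2: "\<And>v. ((\<lambda>y. F' y v) has_derivative \<Psi> v) (at u)"
  shows "h \<bullet> (hess F u *v h) = \<Psi> h h"
proof -
  have pF: "partial F i y = F' y (axis i 1)" if "y \<in> U" for i y
    using partial_eq[OF F1[OF that]] .
  have hij: "hess F u $ i $ l = \<Psi> (axis i 1) (axis l 1)" for i l
  proof -
    have "((\<lambda>y. partial F i y) has_derivative \<Psi> (axis i 1)) (at u)"
      using has_derivative_transform_within_open[OF F2[of "axis i 1"] U] pF by simp
    then show ?thesis by (simp add: hess_def partial_eq)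
  qed
  have linF: "F' y h = (\<Sum>i\<in>UNIV. h$i *\<^sub>R F' y (axis i 1))" if "y \<in> U" for y
    using linear_axis_expand[of "F' y" h] has_derivative_linear[OF F1[OF that]] by simp
  have "((\<lambda>y. F' y h) has_derivative (\<lambda>w. \<Sum>i\<in>UNIV. h$i *\<^sub>R \<Psi> (axis i 1) w)) (at u)"
  proof -
    have "((\<lambda>y. \<Sum>i\<in>UNIV. h$i *\<^sub>R F' y (axis i 1)) has_derivative (\<lambda>w. \<Sum>i\<in>UNIV. h$i *\<^sub>R \<Psi> (axis i 1) w)) (at u)"
      by (intro has_derivative_sum has_derivative_scaleR_right F2)
    then show ?thesis
      using has_derivative_transform_within_open[OF _ U, of "\<lambda>y. \<Sum>i\<in>UNIV. h$i *\<^sub>R F' y (axis i 1)"] linF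
      by simp
  qed
  then have PsiH: "\<Psi> h = (\<lambda>w. \<Sum>i\<in>UNIV. h$i *\<^sub>R \<Psi> (axis i 1) w)"
    using has_derivative_unique F2[of h] by blast
  have lin2: "\<Psi> (axis i 1) h = (\<Sum>l\<in>UNIV. h$l * \<Psi> (axis i 1) (axis l 1))" for i
    using linear_axis_expand[of "\<Psi> (axis i 1)" h] has_derivative_linear[OF F2] by simp
  have "h \<bullet> (hess F u *v h) = (\<Sum>i\<in>UNIV. h$i * (\<Sum>l\<in>UNIV. \<Psi> (axis i 1) (axis l 1) * h$l))"
    by (simp add: inner_vec_def matrix_vector_mult_def hij)
  also have "\<dots> = (\<Sum>i\<in>UNIV. h$i * \<Psi> (axis i 1) h)"
    by (simp add: lin2 mult.commute)
  also have "\<dots> = \<Psi> h h" by (simp add: PsiH)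
  finally show ?thesis .
qed

lemma grad_eq:
  assumes "(F has_derivative F') (at x)"
  shows "grad F x = (\<chi> i. F' (axis i 1))"
  using partial_eq[OF assms] by (simp add: grad_def)

lemma matrix_mult_sum_left: "(\<Sum>b\<in>B. f b) ** (A::real^'n^'m) = (\<Sum>b\<in>B. (f b::real^'m^'k) ** A)"
  using sum.swap by (simp add: matrix_matrix_mult_def vec_eq_iff sum_distrib_right sum_component) fastforce

lemma Hterm_quad:
  "h \<bullet> (Hterm G u L *v h) = 2 * (L \<bullet> (dirder G u h ** mp_inverse (G u) ** dirder G u h))"
proof -
  define X where "X = mp_inverse (G u)"
  define A where "A i = partial G i u" for i
  have "dirder G u h ** X ** dirder G u h = (\<Sum>i\<in>UNIV. \<Sum>l\<in>UNIV. (h$i * h$l) *\<^sub>R (A i ** X ** A l))"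
    by (simp add: dirder_def A_def matrix_mult_sum_left matrix_mult_sum_right scalar_matrix_assoc
        matrix_scalar_ac sum_distrib_left scaleR_sum_right mult_ac)
      (subst sum.swap, simp add: mult.commute)
  then have "L \<bullet> (dirder G u h ** X ** dirder G u h) = (\<Sum>i\<in>UNIV. \<Sum>l\<in>UNIV. h$i * h$l * (L \<bullet> (A i ** X ** A l)))"
    by (simp add: inner_sum_right)
  moreover have "h \<bullet> (Hterm G u L *v h) = (\<Sum>i\<in>UNIV. \<Sum>l\<in>UNIV. h$i * h$l * (2 * (L \<bullet> (A i ** X ** A l))))"
    by (simp add: Hterm_def inner_vec_def matrix_vector_mult_def frob_inner A_def X_def
        sum_distrib_left mult_ac inner_commute)
  ultimately show ?thesis
    by (simp add: X_def sum_distrib_left mult_ac)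
qed

lemma cramer_inv:
  fixes A :: "real^'m^'m"
  assumes "det A \<noteq> 0"
  shows "matrix_inv A $ k $ b = det (\<chi> i j. if j = k then axis b 1 $ i else A$i$j) / det A"
proof -
  have inv: "invertible A" using assms invertible_det_nz by blast
  have "A *v (matrix_inv A *v axis b 1) = axis b 1"
    by (simp add: matrix_vector_mul_assoc matrix_inv_works(1)[OF inv])
  then have "matrix_inv A *v axis b 1 = (\<chi> k. det (\<chi> i j. if j = k then axis b 1 $ i else A$i$j) / det A)"
    using cramer[OF assms] by blast
  then show ?thesis using col_entry[of "matrix_inv A" b k] by simp
qed

lemma has_derivative_const_mult_left:
  fixes A :: "'a::real_normed_vector \<Rightarrow> real^'n^'m"
  assumes "(A has_derivative A') (at x)"
  shows "((\<lambda>y. C ** A y) has_derivative (\<lambda>h. C ** A' h)) (at x)"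
  using has_derivative_matrix_mult[OF has_derivative_const[of C] assms] by simp

lemma has_derivative_const_mult_right:
  fixes A :: "'a::real_normed_vector \<Rightarrow> real^'n^'m"
  assumes "(A has_derivative A') (at x)"
  shows "((\<lambda>y. A y ** C) has_derivative (\<lambda>h. A' h ** C)) (at x)"
  using has_derivative_matrix_mult[OF assms has_derivative_const[of C]] by simp

lemma matrix_neg_ldistrib: "(A::real^'n^'m) ** (- B) = - (A ** B)"
  using matrix_diff_ldistrib[of A 0 B] by simp

lemma matrix_neg_rdistrib: "(- B) ** (A::real^'n^'m) = - ((B::real^'m^'k) ** A)"
  using matrix_diff_rdistrib[of 0 B A] by simp

lemma transpose_neg: "transpose (- (A::real^'n^'m)) = - transpose A"
  by (simp add: transpose_def vec_eq_iff)

lemma poly_if: "(c \<Longrightarrow> (\<lambda>x. f x) \<in> poly_fun) \<Longrightarrow> (\<not> c \<Longrightarrow> (\<lambda>x. g x) \<in> poly_fun) \<Longrightarrow> (\<lambda>x. if c then f x else g x) \<in> poly_fun"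
  by (cases c) auto

locale setting =
  fixes G :: "real^'n \<Rightarrow> real^'m^'m" and I :: "'m set"
  assumes Gpoly: "polymat G" and Gsym: "\<And>x. transpose (G x) = G x"
begin

definition "U = {x. pdet G I x \<noteq> 0}"
abbreviation "P \<equiv> PI I"
abbreviation "Q \<equiv> PI (- I)"
abbreviation "E y \<equiv> Em I (G y)"
abbreviation "p \<equiv> pdet G I"

lemma padA_poly: "polymat (\<lambda>x. padA I (G x))"
  unfolding polymat_def padA_def
proof (intro allI)
  fix a b
  show "(\<lambda>x. (\<chi> a b. if a \<in> I \<and> b \<in> I then G x $ a $ b else if a = b then 1 else 0) $ a $ b) \<in> poly_fun"
    using Gpoly unfolding polymat_def by (auto intro!: poly_if poly_fun.pf_const)
qed

lemma p_poly: "p \<in> poly_fun"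
proof -
  have "(\<lambda>x. det (padA I (G x))) \<in> poly_fun"
    using padA_poly unfolding polymat_def by (intro poly_fun_det) auto
  then show ?thesis by (simp add: pdet_def[abs_def])
qed

lemma U_open: "open U"
  unfolding U_def
  using open_Collect_neq[OF poly_fun_continuous[OF p_poly] continuous_on_const[of UNIV 0]] by simp

lemma inv_U: "x \<in> U \<Longrightarrow> invertible (padA I (G x))"
  by (simp add: U_def pdet_def invertible_det_nz)

lemma blk_U: "x \<in> U \<Longrightarrow> blk (G x) I"
  using inv_U Gsym by (simp add: blk_def)

lemma G_deriv: "(G has_derivative dirder G x) (at x)"
  using polymat_has_derivative[OF Gpoly] by (simp add: fun_eq_iff[symmetric] eta_contract_eq)

lemma Y_deriv:
  assumes "x \<in> U"
  shows "(\<lambda>y. matrix_inv (padA I (G y))) differentiable (at x)"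
proof -
  define N where "N k b y = det (\<chi> i j. if j = k then axis b 1 $ i else padA I (G y) $i$j)" for k b y
  have Npoly: "N k b \<in> poly_fun" for k b
  proof -
    have "(\<lambda>y. det (\<chi> i j. if j = k then axis b 1 $ i else padA I (G y) $i$j)) \<in> poly_fun"
      using padA_poly unfolding polymat_def by (intro poly_fun_det) (auto intro!: poly_if poly_fun.pf_const)
    then show ?thesis by (simp add: N_def[abs_def])
  qed
  have ent: "((\<lambda>y. matrix_inv (padA I (G y)) $ k $ b) has_derivative
     (\<lambda>h. - N k b x * (inverse (p x) * pd p x h * inverse (p x)) + pd (N k b) x h / p x)) (at x)" for k b
  proof -
    have D: "((\<lambda>y. N k b y / p y) has_derivative
       (\<lambda>h. - N k b x * (inverse (p x) * pd p x h * inverse (p x)) + pd (N k b) x h / p x)) (at x)"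
      using assms by (intro has_derivative_divide pd_has_derivative Npoly p_poly) (auto simp: U_def)
    have eq: "N k b y / p y = matrix_inv (padA I (G y)) $ k $ b" if "y \<in> U" for y
      using that cramer_inv[of "padA I (G y)" k b] by (simp add: U_def pdet_def N_def)
    show ?thesis by (rule has_derivative_transform_within_open[OF D U_open assms eq])
  qed
  show ?thesis
    using has_derivative_matrixI[OF ent] differentiable_def by blast
qed

lemma E_deriv:
  assumes "x \<in> U"
  obtains E' where "((\<lambda>y. E y) has_derivative E') (at x)" "\<And>h. P ** E' h = E' h"
proof -
  obtain Y' where Y': "((\<lambda>y. matrix_inv (padA I (G y))) has_derivative Y') (at x)"
    using Y_deriv[OF assms] differentiable_def by blast
  define R where "R y = matrix_inv (padA I (G y)) ** P ** G y ** Q" for y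
  have "(R has_derivative (\<lambda>h. matrix_inv (padA I (G x)) ** P ** (dirder G x h ** Q) + Y' h ** P ** (G x ** Q))) (at x)"
    unfolding R_def matrix_mul_assoc[symmetric]
    by (intro has_derivative_matrix_mult has_derivative_const_mult_right has_derivative_const_mult_left Y' G_deriv)
  then obtain R' where R': "(R has_derivative R') (at x)" by blast
  have "((\<lambda>y. E y) has_derivative (\<lambda>h. - (P ** R' h))) (at x)"
  proof -
    have "((\<lambda>y. Q - P ** R y) has_derivative (\<lambda>h. 0 - P ** R' h)) (at x)"
      by (intro has_derivative_diff has_derivative_const has_derivative_const_mult_left R')
    moreover have "Q - P ** R y = E y" for y by (simp add: Em_alt R_def)
    ultimately show ?thesis by simp
  qed
  moreover have "P ** (- (P ** R' h)) = - (P ** R' h)" for h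
    by (simp add: matrix_neg_ldistrib matrix_mul_assoc PI_idem)
  ultimately show ?thesis using that by blast
qed

lemma schur_U: "y \<in> U \<Longrightarrow> schur G I y = transpose (E y) ** G y ** E y"
  using blk.schur_eq[OF blk_U] by (simp add: schur_def)

lemma S_deriv:
  assumes "x \<in> U"
  shows "(schur G I has_derivative (\<lambda>h. transpose (E x) ** dirder G x h ** E x)) (at x)"
proof -
  obtain E' where E': "((\<lambda>y. E y) has_derivative E') (at x)" and PE': "\<And>h. P ** E' h = E' h"
    using E_deriv[OF assms] by blast
  interpret b: blk "G x" I using blk_U[OF assms] .
  have d: "((\<lambda>y. transpose (E y) ** G y ** E y) has_derivative
      (\<lambda>h. transpose (E x) ** G x ** E' h + (transpose (E x) ** dirder G x h + transpose (E' h) ** G x) ** E x)) (at x)"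
    by (intro has_derivative_matrix_mult has_derivative_transpose E' G_deriv)
  have z1: "transpose (E x) ** G x ** E' h = 0" for h
  proof -
    have "transpose (E x) ** G x ** P = transpose (P ** G x ** E x)"
      by (simp add: matrix_transpose_mul Gsym PI_sym matrix_mul_assoc)
    then have "transpose (E x) ** G x ** P = 0" using b.PGE by simp
    then have "transpose (E x) ** G x ** (P ** E' h) = 0" by (simp add: matrix_mul_assoc)
    then show ?thesis using PE' by simp
  qed
  have z2: "transpose (E' h) ** G x ** E x = 0" for h
  proof -
    have "transpose (E' h) = transpose (E' h) ** P"
      using arg_cong[OF PE'[of h], of transpose] by (simp add: matrix_transpose_mul PI_sym)
    then have "transpose (E' h) ** G x ** E x = transpose (E' h) ** (P ** G x ** E x)"
      by (metis matrix_mul_assoc)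
    then show ?thesis using b.PGE by simp
  qed
  have z1': "transpose (E x) ** (G x ** E' h) = 0" for h using z1[of h] by (simp add: matrix_mul_assoc)
  have z2': "transpose (E' h) ** (G x ** E x) = 0" for h using z2[of h] by (simp add: matrix_mul_assoc)
  have "((\<lambda>y. transpose (E y) ** G y ** E y) has_derivative (\<lambda>h. transpose (E x) ** dirder G x h ** E x)) (at x)"
    using d by (rule has_derivative_eq_rhs) (simp add: fun_eq_iff matrix_add_rdistrib z1' z2' matrix_mul_assoc[symmetric])
  then show ?thesis
    using has_derivative_transform_within_open[OF _ U_open assms] schur_U by (metis (no_types, lifting))
qed

lemma p2_deriv: "((\<lambda>y. (p y)^2) has_derivative (\<lambda>h. 2 * p x * pd p x h)) (at x)"
proof -
  have "((\<lambda>y. p y * p y) has_derivative (\<lambda>h. p x * pd p x h + pd p x h * p x)) (at x)"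
    by (intro has_derivative_mult pd_has_derivative p_poly)
  then show ?thesis by (simp add: power2_eq_square algebra_simps)
qed

lemma T_deriv:
  assumes "x \<in> U"
  shows "(Tmat G I has_derivative (\<lambda>h. (2 * p x * pd p x h) *\<^sub>R schur G I x
            + (p x)^2 *\<^sub>R (transpose (E x) ** dirder G x h ** E x))) (at x)"
proof -
  have "((\<lambda>y. (p y)^2 *\<^sub>R schur G I y) has_derivative (\<lambda>h. (p x)^2 *\<^sub>R (transpose (E x) ** dirder G x h ** E x)
     + (2 * p x * pd p x h) *\<^sub>R schur G I x)) (at x)"
    by (intro has_derivative_scaleR p2_deriv S_deriv assms)
  then show ?thesis by (simp add: Tmat_def[abs_def] add.commute)
qed

end

context blk
begin

lemma kernel_rel:
  assumes GE0: "G0 ** E = 0" and PE1: "P ** E1 = E1"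
    and rel: "P ** (G0 ** E1 + D ** E) = 0" and K0: "transpose E ** D ** E = 0"
  shows "D ** E = - (G0 ** E1)"
proof -
  have PDE: "P ** D ** E = - (P ** G0 ** E1)"
    using rel by (simp add: matrix_add_ldistrib matrix_mul_assoc eq_neg_iff_add_eq_0 add.commute)
  have QDE: "Q ** D ** E = transpose W ** D ** E"
    using K0 by (simp add: ET matrix_diff_rdistrib)
  have ZDE: "Z ** D ** E = - E1"
  proof -
    have "Z ** D ** E = Z ** (P ** D ** E)" using ZP by (metis matrix_mul_assoc)
    also have "\<dots> = - (Z ** P ** G0 ** E1)" by (simp add: PDE matrix_neg_ldistrib matrix_mul_assoc)
    also have "Z ** P ** G0 ** E1 = Z ** G0 ** (P ** E1)" by (simp add: ZP PE1)
    also have "\<dots> = Z ** G0 ** P ** E1" by (simp add: matrix_mul_assoc)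
    also have "\<dots> = E1" by (simp add: ZGP PE1)
    finally show ?thesis .
  qed
  have "transpose W ** D ** E = Q ** G0 ** (Z ** D ** E)" by (simp add: WT matrix_mul_assoc)
  also have "\<dots> = - (Q ** G0 ** E1)" by (simp add: ZDE matrix_neg_ldistrib)
  finally have QDE': "Q ** D ** E = - (Q ** G0 ** E1)" using QDE by simp
  have "D ** E = (P + Q) ** D ** E" by (simp add: PQ1)
  also have "\<dots> = - (P ** G0 ** E1) - Q ** G0 ** E1" by (simp add: matrix_add_rdistrib PDE QDE')
  also have "\<dots> = - ((P + Q) ** G0 ** E1)" by (simp add: matrix_add_rdistrib)
  finally show ?thesis by (simp add: PQ1)
qed

lemma kernel_quantities:
  assumes DE: "D ** E = - (G0 ** E1)" and Dsym: "transpose D = D"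
  shows "transpose E ** D ** E1 = - (transpose E1 ** G0 ** E1)"
    "transpose E1 ** D ** E = - (transpose E1 ** G0 ** E1)"
    "G0 ** X0 ** G0 = G0 \<Longrightarrow> transpose E ** (D ** X0 ** D) ** E = transpose E1 ** G0 ** E1"
proof -
  have ETD: "transpose E ** D = - (transpose E1 ** G0)"
    using arg_cong[OF DE, of transpose] by (simp add: matrix_transpose_mul Dsym sym transpose_neg)
  show "transpose E ** D ** E1 = - (transpose E1 ** G0 ** E1)"
    by (simp add: ETD matrix_neg_rdistrib)
  show "transpose E1 ** D ** E = - (transpose E1 ** G0 ** E1)"
    by (simp add: matrix_mul_assoc[symmetric] DE matrix_neg_ldistrib)
  assume GXG: "G0 ** X0 ** G0 = G0"
  have "transpose E ** (D ** X0 ** D) ** E = (transpose E ** D) ** X0 ** (D ** E)"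
    by (simp add: matrix_mul_assoc)
  also have "\<dots> = transpose E1 ** (G0 ** X0 ** G0) ** E1"
    by (simp add: ETD DE matrix_neg_ldistrib matrix_neg_rdistrib matrix_mul_assoc)
  finally show "transpose E ** (D ** X0 ** D) ** E = transpose E1 ** G0 ** E1" by (simp add: GXG)
qed

end

context setting
begin

lemma dirder_sym: "transpose (dirder G x h) = dirder G x h"
proof -
  have "((\<lambda>y. transpose (G y)) has_derivative (\<lambda>h. transpose (dirder G x h))) (at x)"
    by (rule has_derivative_transpose[OF G_deriv])
  then have "(G has_derivative (\<lambda>h. transpose (dirder G x h))) (at x)" using Gsym by simp
  then have "(\<lambda>h. transpose (dirder G x h)) = dirder G x"
    using has_derivative_unique G_deriv by blast
  then show ?thesis by (metis)
qed

lemma PGE_deriv: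
  assumes xU: "x \<in> U" and E': "((\<lambda>y. E y) has_derivative E') (at x)"
  shows "P ** (G x ** E' h + dirder G x h ** E x) = 0"
proof -
  have D: "((\<lambda>y. P ** (G y ** E y)) has_derivative (\<lambda>h. P ** (G x ** E' h + dirder G x h ** E x))) (at x)"
    by (intro has_derivative_const_mult_left has_derivative_matrix_mult G_deriv E')
  have z: "P ** (G y ** E y) = 0" if "y \<in> U" for y
    using blk.PGE[OF blk_U[OF that]] by (simp add: matrix_mul_assoc)
  have "((\<lambda>y. 0::real^'m^'m) has_derivative (\<lambda>h. P ** (G x ** E' h + dirder G x h ** E x))) (at x)"
    by (rule has_derivative_transform_within_open[OF D U_open xU]) (simp add: z)
  then have "(\<lambda>h. P ** (G x ** E' h + dirder G x h ** E x)) = (\<lambda>h. 0)"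
    using has_derivative_unique has_derivative_const by blast
  then show ?thesis by (metis)
qed

definition TD :: "real^'n \<Rightarrow> real^'n \<Rightarrow> real^'m^'m" where
  "TD y v = (2 * p y * pd p y v) *\<^sub>R schur G I y + (p y)^2 *\<^sub>R (transpose (E y) ** dirder G y v ** E y)"

lemma T_deriv': "y \<in> U \<Longrightarrow> (Tmat G I has_derivative TD y) (at y)"
  using T_deriv unfolding TD_def[abs_def] by simp

lemma c_poly: "(\<lambda>y. 2 * p y * pd p y v) \<in> poly_fun"
  by (intro poly_fun.pf_mult poly_fun_cmult p_poly pd_poly)

lemma TD_deriv:
  assumes xU: "x \<in> U" and E': "((\<lambda>y. E y) has_derivative E') (at x)"
  shows "((\<lambda>y. TD y v) has_derivative (\<lambda>w.
     ((2 * p x * pd p x v) *\<^sub>R (transpose (E x) ** dirder G x w ** E x)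
       + pd (\<lambda>y. 2 * p y * pd p y v) x w *\<^sub>R schur G I x)
     + ((p x)^2 *\<^sub>R (transpose (E x) ** dirder G x v ** E' w
          + (transpose (E x) ** dirder (\<lambda>y. dirder G y v) x w + transpose (E' w) ** dirder G x v) ** E x)
       + (2 * p x * pd p x w) *\<^sub>R (transpose (E x) ** dirder G x v ** E x)))) (at x)"
  unfolding TD_def
  by (intro has_derivative_add has_derivative_scaleR pd_has_derivative c_poly S_deriv xU p2_deriv
      has_derivative_matrix_mult has_derivative_transpose E'
      polymat_has_derivative[OF polymat_dirder[OF Gpoly]])

end

theorem proposition4p2:
  fixes f :: "real^'n \<Rightarrow> real"
    and G :: "real^'n \<Rightarrow> real^'m^'m"
    and u :: "real^'n"
    and \<Lambda> :: "real^'m^'m"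
    and I :: "'m set"
  assumes f_poly: "f \<in> poly_fun"
    and G_poly: "sym_poly_matrix G"
    and min: "minimizer f G u"
    and ND: "nondegenerate G u"
    and KKT: "KKT_multiplier f G u \<Lambda>"
    and SC: "strict_compl G u \<Lambda>"
    and SOS: "SOSC f G u \<Lambda>"
    and I_card: "card I = rank (G u)"
    and A_rank: "invertible (padA I (G u))"
  shows "\<exists>\<Theta> \<in> sym_on (- I).
           grad (\<lambda>x. f x - frob \<Theta> (Tmat G I x)) u = 0 \<and>
           psd_on (- I) \<Theta> \<and> psd_on (- I) (Tmat G I u) \<and> frob \<Theta> (Tmat G I u) = 0 \<and>
           (\<forall>X \<in> sym_on (- I). dirder_adj (Tmat G I) u X = 0 \<longrightarrow> X = 0) \<and>
           pd_on (- I) \<Theta> \<and>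
           (\<forall>h. h \<noteq> 0 \<longrightarrow> dirder (Tmat G I) u h = 0 \<longrightarrow>
                 0 < h \<bullet> (hess (\<lambda>x. f x - frob \<Theta> (Tmat G I x)) u *v h))"
proof -
  have Gpm: "polymat G" using G_poly by (simp add: sym_poly_matrix_def polymat_def)
  have Gs: "\<And>x. transpose (G x) = G x" using G_poly by (simp add: sym_poly_matrix_def)
  interpret S: setting G I using Gpm Gs by unfold_locales
  have uU: "u \<in> S.U" using A_rank by (simp add: S.U_def pdet_def invertible_det_nz)
  interpret B: blk "G u" I using S.blk_U[OF uU] .
  let ?E = "Em I (G u)"
  let ?P = "PI I" and ?Q = "PI (- I)"
  have rk: "rank (G u) = card I" using I_card by simp
  have QGE: "?Q ** G u ** ?E = 0" by (rule B.rank_schur_zero[OF rk])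
  have S0: "schur G I u = 0" using S.schur_U[OF uU] B.ETGE QGE by simp
  have GE0: "G u ** ?E = 0"
  proof -
    have "G u ** ?E = (?P + ?Q) ** G u ** ?E" by (simp add: PI_compl)
    also have "\<dots> = 0" by (simp add: matrix_add_rdistrib B.PGE QGE)
    finally show ?thesis .
  qed
  have Ls: "transpose \<Lambda> = \<Lambda>" and gradf: "grad f u - dirder_adj G u \<Lambda> = 0"
    and psdL: "psd \<Lambda>" and psdG: "psd (G u)" and fr0: "frob \<Lambda> (G u) = 0"
    using KKT by (auto simp: KKT_multiplier_def)
  have LG: "\<Lambda> ** G u = 0" using psd_inner_zero[OF psdL psdG] fr0 by (simp add: frob_inner)
  have rkL: "rank \<Lambda> = CARD('m) - card I" using SC rk by (simp add: strict_compl_def)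
  define \<Phi> where "\<Phi> = (mat 1 + Wm I (G u)) ** \<Lambda> ** transpose (mat 1 + Wm I (G u))"
  have Ldec: "\<Lambda> = ?E ** \<Phi> ** transpose ?E" and QPhi: "?Q ** \<Phi> = \<Phi>" and PhiQ: "\<Phi> ** ?Q = \<Phi>"
    and PhiT: "transpose \<Phi> = \<Phi>"
    using B.lambda_decomp[OF LG Ls] unfolding \<Phi>_def by auto
  have psdPhi: "psd \<Phi>" and pdPhi: "pd_on (- I) \<Phi>"
    using B.phi_pd[OF psdL rkL Ldec QPhi PhiT \<Phi>_def] by auto
  define p0 where "p0 = pdet G I u"
  have p0: "p0 \<noteq> 0" using uU by (simp add: S.U_def p0_def)
  define \<Theta> where "\<Theta> = (1 / p0^2) *\<^sub>R \<Phi>"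
  have ThPhi: "p0^2 *\<^sub>R \<Theta> = \<Phi>" using p0 by (simp add: \<Theta>_def)
  have ThM: "\<Theta> \<bullet> (p0^2 *\<^sub>R M) = \<Phi> \<bullet> M" for M
    using ThPhi by (metis inner_scaleR_left inner_scaleR_right)
  have ThM': "p0^2 * (\<Theta> \<bullet> M) = \<Phi> \<bullet> M" for M
    using ThM[of M] by simp
  have LM: "\<Lambda> \<bullet> M = \<Phi> \<bullet> (transpose ?E ** M ** ?E)" for M
    using inner_congr[of ?E \<Phi> M] Ldec by simp
  have TDu: "S.TD u = (\<lambda>h. p0^2 *\<^sub>R (transpose ?E ** dirder G u h ** ?E))"
    by (simp add: fun_eq_iff S.TD_def S0 p0_def)
  have TDer: "(Tmat G I has_derivative (\<lambda>h. p0^2 *\<^sub>R (transpose ?E ** dirder G u h ** ?E))) (at u)"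
    using S.T_deriv'[OF uU] TDu by simp
  have dirG_axis: "dirder G u (axis i 1) = partial G i u" for i
    using partial_eq[OF S.G_deriv] by simp
  have dirT: "dirder (Tmat G I) u h = p0^2 *\<^sub>R (transpose ?E ** dirder G u h ** ?E)" for h
    using has_derivative_dirder[OF TDer] by simp
  have partT: "partial (Tmat G I) i u = p0^2 *\<^sub>R (transpose ?E ** partial G i u ** ?E)" for i
    using partial_eq[OF TDer] dirG_axis by simp
  have Feq: "(\<lambda>x. f x - frob \<Theta> (Tmat G I x)) = (\<lambda>x. f x - \<Theta> \<bullet> Tmat G I x)"
    by (simp add: frob_inner)
  have FDer: "((\<lambda>x. f x - \<Theta> \<bullet> Tmat G I x) has_derivative
      (\<lambda>h. pd f u h - \<Theta> \<bullet> (p0^2 *\<^sub>R (transpose ?E ** dirder G u h ** ?E)))) (at u)"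
    by (intro has_derivative_diff pd_has_derivative f_poly
        bounded_linear.has_derivative[OF bounded_linear_inner_right TDer])
  have Tu0: "Tmat G I u = 0" by (simp add: Tmat_def S0)
  show ?thesis
  proof (intro bexI[of _ \<Theta>] conjI)
    show "\<Theta> \<in> sym_on (- I)"
      unfolding sym_on_def
    proof (intro CollectI conjI allI impI)
      show "transpose \<Theta> = \<Theta>" by (simp add: \<Theta>_def transpose_scalar PhiT)
    next
      fix i j assume ij: "i \<notin> - I \<or> j \<notin> - I"
      have "\<Phi> $ i $ j = 0"
      proof (cases "i \<notin> - I")
        case True
        have "\<Phi> $ i $ j = (?Q ** \<Phi>) $ i $ j" using QPhi by simp
        also have "\<dots> = 0" using True by (simp only: PI_left if_False)
        finally show ?thesis .
      next
        case False
        then have "j \<notin> - I" using ij by blast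
        have "\<Phi> $ i $ j = (\<Phi> ** ?Q) $ i $ j" using PhiQ by simp
        also have "\<dots> = 0" using \<open>j \<notin> - I\<close> by (simp only: PI_right if_False)
        finally show ?thesis .
      qed
      then show "\<Theta> $ i $ j = 0" by (simp add: \<Theta>_def)
    qed
  next
    show "grad (\<lambda>x. f x - frob \<Theta> (Tmat G I x)) u = 0"
      unfolding Feq grad_eq[OF FDer]
    proof (subst vec_eq_iff, intro allI)
      fix i
      have gi: "partial f i u = partial G i u \<bullet> \<Lambda>"
        using gradf by (simp add: vec_eq_iff grad_def dirder_adj_def frob_inner)
      show "(\<chi> i. pd f u (axis i 1) - \<Theta> \<bullet> (p0\<^sup>2 *\<^sub>R (transpose ?E ** dirder G u (axis i 1) ** ?E))) $ i = 0 $ i"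
        by (simp add: ThM' pd_axis dirG_axis LM[symmetric] gi inner_commute)
    qed
  next
    show "psd_on (- I) \<Theta>"
      unfolding psd_on_def
    proof (intro allI impI)
      fix v :: "real^'m"
      have "0 \<le> v \<bullet> (\<Phi> *v v)" using psdPhi psd_def by blast
      then show "0 \<le> v \<bullet> (\<Theta> *v v)" by (simp add: \<Theta>_def scaleR_matrix_vector_assoc[symmetric])
    qed
  next
    show "psd_on (- I) (Tmat G I u)" by (simp add: psd_on_def Tu0)
  next
    show "frob \<Theta> (Tmat G I u) = 0" by (simp add: frob_inner Tu0)
  next
    show "\<forall>X\<in>sym_on (- I). dirder_adj (Tmat G I) u X = 0 \<longrightarrow> X = 0"
    proof (intro ballI impI)
      fix X assume X: "X \<in> sym_on (- I)" and adj: "dirder_adj (Tmat G I) u X = 0"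
      have XT: "transpose X = X" and Xz: "\<And>i j. i \<notin> - I \<or> j \<notin> - I \<Longrightarrow> X $ i $ j = 0"
        using X by (auto simp: sym_on_def)
      define N where "N = ?E ** X ** transpose ?E"
      have each: "partial G i u \<bullet> N = 0" for i
      proof -
        have "frob (partial (Tmat G I) i u) X = 0" using adj by (simp add: dirder_adj_def vec_eq_iff)
        then have "p0^2 * ((transpose ?E ** partial G i u ** ?E) \<bullet> X) = 0"
          by (simp add: partT frob_inner)
        then have "(transpose ?E ** partial G i u ** ?E) \<bullet> X = 0" using p0 by simp
        then show ?thesis using inner_congr[of ?E X "partial G i u"] by (simp add: N_def inner_commute)
      qed
      obtain d M where M: "M \<in> kerzero_set (G u)" and NdM: "N = dirder G u d + M"
        using ND unfolding nondegenerate_def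
        by (metis N_def XT matrix_transpose_mul transpose_transpose matrix_mul_assoc)
      have N1: "N \<bullet> dirder G u d = 0"
        using each by (simp add: dirder_def inner_sum_right inner_commute)
      have ETME: "transpose ?E ** M ** ?E = 0"
      proof -
        have "(transpose ?E ** M ** ?E) $ j $ k = 0" for j k
        proof -
          have "G u *v (?E *v axis j 1) = 0" "G u *v (?E *v axis k 1) = 0"
            by (simp_all add: matrix_vector_mul_assoc GE0)
          then show ?thesis using M by (simp add: quad_congr kerzero_set_def)
        qed
        then show ?thesis by (simp add: vec_eq_iff)
      qed
      have N2: "N \<bullet> M = 0"
        using inner_congr[of ?E X M] ETME by (simp add: N_def)
      have "N \<bullet> N = 0" using N1 N2 NdM by (metis inner_add_right add_0)
      then have N0: "N = 0" by simp
      have QE: "?Q ** ?E = ?Q" by (rule B.QE)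
      have ETQ: "transpose ?E ** ?Q = ?Q"
        using arg_cong[OF QE, of transpose] by (simp add: matrix_transpose_mul PI_sym)
      have "?Q ** N ** ?Q = ?Q ** X ** ?Q"
      proof -
        have "?Q ** N ** ?Q = (?Q ** ?E) ** X ** (transpose ?E ** ?Q)"
          by (simp add: N_def matrix_mul_assoc)
        then show ?thesis by (simp add: QE ETQ)
      qed
      moreover have "?Q ** X ** ?Q = X"
        using Xz by (auto simp: vec_eq_iff PI_left PI_right)
      ultimately show "X = 0" using N0 by simp
    qed
  next
    show "pd_on (- I) \<Theta>"
      unfolding pd_on_def
    proof (intro allI impI)
      fix v :: "real^'m"
      assume "\<forall>i. i \<notin> - I \<longrightarrow> v $ i = 0" "v \<noteq> 0"
      then have "0 < v \<bullet> (\<Phi> *v v)" using pdPhi pd_on_def by blast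
      then show "0 < v \<bullet> (\<Theta> *v v)" using p0 by (simp add: \<Theta>_def scaleR_matrix_vector_assoc[symmetric])
    qed
  next
    show "\<forall>h. h \<noteq> 0 \<longrightarrow> dirder (Tmat G I) u h = 0 \<longrightarrow>
        0 < h \<bullet> (hess (\<lambda>x. f x - frob \<Theta> (Tmat G I x)) u *v h)"
    proof (intro allI impI)
      fix h :: "real^'n"
      assume h0: "h \<noteq> 0" and dT: "dirder (Tmat G I) u h = 0"
      let ?D = "dirder G u h"
      let ?D2 = "dirder (\<lambda>y. dirder G y h) u h"
      have K0: "transpose ?E ** ?D ** ?E = 0" using dT p0 by (simp add: dirT)
      obtain E' where E': "((\<lambda>y. Em I (G y)) has_derivative E') (at u)" and PE': "\<And>h. ?P ** E' h = E' h"
        using S.E_deriv[OF uU] by blast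
      have rel: "?P ** (G u ** E' h + ?D ** ?E) = 0" by (rule S.PGE_deriv[OF uU E'])
      have DE: "?D ** ?E = - (G u ** E' h)" by (rule B.kernel_rel[OF GE0 PE' rel K0])
      have Dsym: "transpose ?D = ?D" by (rule S.dirder_sym)
      note q = B.kernel_quantities[OF DE Dsym]
      have q3: "transpose ?E ** (?D ** mp_inverse (G u) ** ?D) ** ?E = transpose (E' h) ** G u ** E' h"
        using q(3) mp_inverse_sym[OF Gs] by blast
      have crit: "h \<in> crit_cone G u"
        unfolding crit_cone_def
      proof (intro CollectI allI impI)
        fix v w assume v: "G u *v v = 0" and w: "G u *v w = 0"
        have "v \<bullet> (?D *v w) = (?E *v v) \<bullet> (?D *v (?E *v w))" using B.kerE[OF v] B.kerE[OF w] by simp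
        also have "\<dots> = (?E *v v) \<bullet> ((?D ** ?E) *v w)" by (simp only: matrix_vector_mul_assoc)
        also have "\<dots> = v \<bullet> (transpose ?E *v ((?D ** ?E) *v w))"
        proof -
          have "v \<bullet> (transpose ?E *v ((?D ** ?E) *v w)) = (?E *v v) \<bullet> ((?D ** ?E) *v w)"
            using inner_mulv_transpose[of v "transpose ?E" "(?D ** ?E) *v w"] by (simp only: transpose_transpose)
          then show ?thesis by (rule sym)
        qed
        also have "\<dots> = v \<bullet> ((transpose ?E ** ?D ** ?E) *v w)"
          by (simp only: matrix_vector_mul_assoc matrix_mul_assoc)
        finally show "v \<bullet> (?D *v w) = 0" by (simp add: K0)
      qed
      have sosc: "0 < h \<bullet> ((hess (Lagr f G \<Lambda>) u + Hterm G u \<Lambda>) *v h)"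
        using SOS crit h0 by (simp add: SOSC_def)
      have hessL: "h \<bullet> (hess (Lagr f G \<Lambda>) u *v h) = pd (\<lambda>y. pd f y h) u h - \<Lambda> \<bullet> ?D2"
      proof (rule hess_quad[of UNIV u "Lagr f G \<Lambda>" "\<lambda>y v. pd f y v - \<Lambda> \<bullet> dirder G y v"
            "\<lambda>v w. pd (\<lambda>y. pd f y v) u w - \<Lambda> \<bullet> dirder (\<lambda>y. dirder G y v) u w"])
        fix y
        have "Lagr f G \<Lambda> = (\<lambda>x. f x - \<Lambda> \<bullet> G x)" by (simp add: fun_eq_iff Lagr_def frob_inner)
        then show "(Lagr f G \<Lambda> has_derivative (\<lambda>v. pd f y v - \<Lambda> \<bullet> dirder G y v)) (at y)"
          by (simp only:) (intro has_derivative_diff pd_has_derivative f_poly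
              bounded_linear.has_derivative[OF bounded_linear_inner_right S.G_deriv])
      next
        fix v
        show "((\<lambda>y. pd f y v - \<Lambda> \<bullet> dirder G y v) has_derivative
            (\<lambda>w. pd (\<lambda>y. pd f y v) u w - \<Lambda> \<bullet> dirder (\<lambda>y. dirder G y v) u w)) (at u)"
          by (intro has_derivative_diff pd_has_derivative pd_poly f_poly
              bounded_linear.has_derivative[OF bounded_linear_inner_right
                polymat_has_derivative[OF polymat_dirder[OF Gpm]]])
      qed auto
      define DTD where "DTD v w =
        ((2 * pdet G I u * pd (pdet G I) u v) *\<^sub>R (transpose ?E ** dirder G u w ** ?E)
          + pd (\<lambda>y. 2 * pdet G I y * pd (pdet G I) y v) u w *\<^sub>R schur G I u)
        + ((pdet G I u)^2 *\<^sub>R (transpose ?E ** dirder G u v ** E' w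
             + (transpose ?E ** dirder (\<lambda>y. dirder G y v) u w + transpose (E' w) ** dirder G u v) ** ?E)
          + (2 * pdet G I u * pd (pdet G I) u w) *\<^sub>R (transpose ?E ** dirder G u v ** ?E))" for v w
      have hessR: "h \<bullet> (hess (\<lambda>x. f x - \<Theta> \<bullet> Tmat G I x) u *v h) = pd (\<lambda>y. pd f y h) u h - \<Theta> \<bullet> DTD h h"
      proof (rule hess_quad[of S.U u "\<lambda>x. f x - \<Theta> \<bullet> Tmat G I x" "\<lambda>y v. pd f y v - \<Theta> \<bullet> S.TD y v"
            "\<lambda>v w. pd (\<lambda>y. pd f y v) u w - \<Theta> \<bullet> DTD v w"])
        show "open S.U" by (rule S.U_open)
        show "u \<in> S.U" by (rule uU)
      next
        fix y assume "y \<in> S.U"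
        then show "((\<lambda>x. f x - \<Theta> \<bullet> Tmat G I x) has_derivative (\<lambda>v. pd f y v - \<Theta> \<bullet> S.TD y v)) (at y)"
          by (intro has_derivative_diff pd_has_derivative f_poly
              bounded_linear.has_derivative[OF bounded_linear_inner_right S.T_deriv'])
      next
        fix v
        show "((\<lambda>y. pd f y v - \<Theta> \<bullet> S.TD y v) has_derivative (\<lambda>w. pd (\<lambda>y. pd f y v) u w - \<Theta> \<bullet> DTD v w)) (at u)"
          unfolding DTD_def
          by (intro has_derivative_diff pd_has_derivative pd_poly f_poly
              bounded_linear.has_derivative[OF bounded_linear_inner_right S.TD_deriv[OF uU E']])
      qed
      have DTDhh: "\<Theta> \<bullet> DTD h h = \<Phi> \<bullet> (transpose ?E ** ?D ** E' h
             + (transpose ?E ** ?D2 + transpose (E' h) ** ?D) ** ?E)"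
        using K0 S0 by (simp add: DTD_def p0_def[symmetric] ThM ThM')
      have expand: "\<Phi> \<bullet> (transpose ?E ** ?D ** E' h + (transpose ?E ** ?D2 + transpose (E' h) ** ?D) ** ?E)
          = \<Lambda> \<bullet> ?D2 - 2 * (\<Phi> \<bullet> (transpose (E' h) ** G u ** E' h))"
        by (simp only: matrix_add_rdistrib inner_add_right q(1) q(2) LM inner_minus_right)
      have hterm: "h \<bullet> (Hterm G u \<Lambda> *v h) = 2 * (\<Phi> \<bullet> (transpose (E' h) ** G u ** E' h))"
        by (simp add: Hterm_quad LM q3)
      have hsplit: "h \<bullet> ((hess (Lagr f G \<Lambda>) u + Hterm G u \<Lambda>) *v h)
          = h \<bullet> (hess (Lagr f G \<Lambda>) u *v h) + h \<bullet> (Hterm G u \<Lambda> *v h)"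
        by (simp only: matrix_vector_mult_add_rdistrib inner_add_right)
      have "0 < h \<bullet> (hess (\<lambda>x. f x - \<Theta> \<bullet> Tmat G I x) u *v h)"
        using sosc hsplit hessL hterm hessR DTDhh expand by linarith
      then show "0 < h \<bullet> (hess (\<lambda>x. f x - frob \<Theta> (Tmat G I x)) u *v h)"
        by (simp only: Feq)
    qed
  qed
qed


end
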